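(* Let $q$, $r_1,r_2,r_3$, $m_1$ and $V_j^l$ be as in the context, let $c_1,c_2,c_3\in\mathbb{C}$ be non-aligned with $c_1+c_2+c_3=0$, and let $\epsilon_0>0,\alpha_0>0$ be such that for every $\rho$ with $1-\alpha_0\le|\rho|\le1+\alpha_0$ the maps $\phi_j(z)=\rho z+\epsilon_0c_j$ satisfy $\overline{\mathbb{D}}\subset\bigcup_j\phi_j(\mathbb{D})$ and admit open sets $H_1,H_2,H_3$ with $\mathbb{D}=\bigcup_jH_j$, $\overline{\phi_j(H_j)}\subset\mathbb{D}$, $\overline{\phi_j(\frac13H_j)}\subset\frac13\mathbb{D}$ (as produced by the paper's construction). There exist $l_0\ge1$ and $\delta_0>0$ such that if $l\ge l_0$, $\rho\in\mathbb{C}$ satisfies $|\rho|=1-\alpha_0$, and $g$ is a polynomial skew product of the form $g(z,w)=(h(z,w),q^{m_1l}(w))$ with $|h(z,w)-(\rho z+\epsilon_0c_j)|\le\delta_0$ for all $(z,w)\in2\mathbb{D}\times V_j^l$ and $j\in\{1,2,3\}$, then $g$ has a blender of saddle type $$\Lambda_g:=\bigcap_{n\ge0}g^{-n}\Big(\overline{\textstyle\bigcup_{i=1}^3\mathbb{D}\times V_i^l}\Big).$$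
   Context: $q$ is a complex polynomial of degree $d\ge2$; $r_1,r_2,r_3$ distinct repelling periodic points of period $m_1$, multipliers $\chi_i$, not in the postcritical set of $q$. The $V_i^l$ are connected open neighborhoods of $r_i$ with: $q^{m_1}$ maps $V_i^{l+1}$ biholomorphically onto $V_i^l$; diameters decrease exponentially; for $l$ large, $|(q^{lm_1})'|\ge A|\chi_i|^l>1$ on $V_i^l$, $\overline{\bigcup_jV_j^l}\subset q^{lm_1}(V_i^l)$, and $q^{lm_1}$ maps $V_i^l\cap q^{-lm_1}(V_j^l)$ biholomorphically onto $V_j^l$. $\mathbb{D}$ is the unit disc. A polynomial skew product is a polynomial map of this form extending to a holomorphic endomorphism of $\mathbb{P}^2$ (of some degree $D$). Blender of saddle type: for $f\in\mathcal{H}_D(\mathbb{P}^2)$ and open $Z\subset\mathbb{P}^2$ with $\overline Z\subset f(Z)$, if for all $g\in\mathcal{H}_D(\mathbb{P}^2)$ close enough to $f$ the set $\bigcap_{n\ge0}g^{-n}(\overline Z)$ is a hyperbolic set with one stable and one unstable direction (hyperbolicity being defined on the natural extension), then $\bigcap_{n\ge0}f^{-n}(\overline Z)$ is a blender of saddle type. *)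

theory Defs
  imports "HOL-Analysis.Analysis" "HOL-Computational_Algebra.Polynomial"
begin

text \<open>Points of the affine chart C^2 of P^2 (coordinates (z,w)).\<close>
type_synonym pt = "complex \<times> complex"

definition hev :: "nat \<Rightarrow> (nat \<times> nat \<Rightarrow> complex) \<Rightarrow> complex \<Rightarrow> complex \<Rightarrow> complex \<Rightarrow> complex" where
  "hev D a x y t = (\<Sum>(i,j)\<in>(SIGMA i:{..D}. {..D-i}). a (i,j) * x^i * y^j * t^(D-i-j))"

text \<open>A triple (P1,P2,P3) of homogeneous polynomials of degree D (a representative
  of a point in H_D(P^2)).\<close>
type_synonym hmap = "(nat \<times> nat \<Rightarrow> complex) \<times> (nat \<times> nat \<Rightarrow> complex) \<times> (nat \<times> nat \<Rightarrow> complex)"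

definition P1 :: "hmap \<Rightarrow> nat \<times> nat \<Rightarrow> complex" where "P1 F = fst F"
definition P2 :: "hmap \<Rightarrow> nat \<times> nat \<Rightarrow> complex" where "P2 F = fst (snd F)"
definition P3 :: "hmap \<Rightarrow> nat \<times> nat \<Rightarrow> complex" where "P3 F = snd (snd F)"

definition inH :: "nat \<Rightarrow> hmap \<Rightarrow> bool" where
  "inH D F \<longleftrightarrow> D \<ge> 1 \<and> (\<forall>x y t. (x,y,t) \<noteq> (0,0,0) \<longrightarrow>
      (hev D (P1 F) x y t, hev D (P2 F) x y t, hev D (P3 F) x y t) \<noteq> (0,0,0))"

text \<open>Coefficient-closeness of representatives (induces the topology of H_D).\<close>
definition near :: "nat \<Rightarrow> hmap \<Rightarrow> hmap \<Rightarrow> real \<Rightarrow> bool" where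
  "near D F G e \<longleftrightarrow> (\<forall>i j. i + j \<le> D \<longrightarrow>
      cmod (P1 F (i,j) - P1 G (i,j)) < e \<and> cmod (P2 F (i,j) - P2 G (i,j)) < e
      \<and> cmod (P3 F (i,j) - P3 G (i,j)) < e)"

definition den :: "nat \<Rightarrow> hmap \<Rightarrow> pt \<Rightarrow> complex" where
  "den D F p = hev D (P3 F) (fst p) (snd p) 1"

definition aff :: "nat \<Rightarrow> hmap \<Rightarrow> pt \<Rightarrow> pt" where
  "aff D F p = (hev D (P1 F) (fst p) (snd p) 1 / den D F p,
                hev D (P2 F) (fst p) (snd p) 1 / den D F p)"

text \<open>\<open>\<Inter>\<^sub>n f\<^sup>-\<^sup>n(K)\<close> for K contained in the affine chart C^2.\<close>
definition lam :: "nat \<Rightarrow> hmap \<Rightarrow> pt set \<Rightarrow> pt set" where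
  "lam D F K = {p. \<exists>x. x 0 = p \<and> (\<forall>n. x n \<in> K \<and> den D F (x n) \<noteq> 0 \<and> x (Suc n) = aff D F (x n))}"

definition natext :: "nat \<Rightarrow> hmap \<Rightarrow> pt set \<Rightarrow> (nat \<Rightarrow> pt) set" where
  "natext D F L = {xh. (\<forall>k. xh k \<in> L) \<and> (\<forall>k. den D F (xh (Suc k)) \<noteq> 0 \<and> aff D F (xh (Suc k)) = xh k)}"

definition shift :: "nat \<Rightarrow> hmap \<Rightarrow> (nat \<Rightarrow> pt) \<Rightarrow> nat \<Rightarrow> pt" where
  "shift D F xh = (\<lambda>k. case k of 0 \<Rightarrow> aff D F (xh 0) | Suc m \<Rightarrow> xh m)"

definition Df :: "nat \<Rightarrow> hmap \<Rightarrow> pt \<Rightarrow> pt \<Rightarrow> pt" where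
  "Df D F p = frechet_derivative (aff D F) (at p)"

fun Dit :: "nat \<Rightarrow> hmap \<Rightarrow> nat \<Rightarrow> pt \<Rightarrow> pt \<Rightarrow> pt" where
  "Dit D F 0 p v = v"
| "Dit D F (Suc n) p v = Dit D F n (aff D F p) (Df D F p v)"

definition cline :: "pt \<Rightarrow> pt set" where
  "cline v = {(c * fst v, c * snd v) | c. True}"

definition hyp_saddle :: "nat \<Rightarrow> hmap \<Rightarrow> pt set \<Rightarrow> bool" where
  "hyp_saddle D F L \<longleftrightarrow> (\<exists>C lam Es Eu. C > 0 \<and> 0 < lam \<and> lam < 1 \<and>
     (\<forall>xh\<in>natext D F L.
        Es xh \<noteq> 0 \<and> Eu xh \<noteq> 0 \<and>
        fst (Es xh) * snd (Eu xh) - snd (Es xh) * fst (Eu xh) \<noteq> 0 \<and>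
        Df D F (xh 0) ` cline (Es xh) = cline (Es (shift D F xh)) \<and>
        Df D F (xh 0) ` cline (Eu xh) = cline (Eu (shift D F xh)) \<and>
        (\<forall>n v. v \<in> cline (Es xh) \<longrightarrow> norm (Dit D F n (xh 0) v) \<le> C * lam ^ n * norm v) \<and>
        (\<forall>n v. v \<in> cline (Eu xh) \<longrightarrow> norm (Dit D F n (xh 0) v) \<ge> (1 / C) * (1 / lam) ^ n * norm v)))"

definition blender_saddle :: "nat \<Rightarrow> hmap \<Rightarrow> pt set \<Rightarrow> bool" where
  "blender_saddle D F Z \<longleftrightarrow> inH D F \<and> open Z \<and>
     closure Z \<subseteq> aff D F ` {p \<in> Z. den D F p \<noteq> 0} \<and>
     (\<exists>e>0. \<forall>G. inH D G \<and> near D F G e \<longrightarrow> hyp_saddle D G (lam D G (closure Z)))"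

definition postcritical :: "complex poly \<Rightarrow> complex set" where
  "postcritical q = closure {(poly q ^^ n) c | n c. n \<ge> 1 \<and> poly (pderiv q) c = 0}"

end

theory Submission
  imports Defs "HOL-Complex_Analysis.Cauchy_Integral_Formula"
begin

definition lin2 :: "complex \<Rightarrow> pt \<Rightarrow> complex \<Rightarrow> pt \<Rightarrow> pt" where
  "lin2 \<alpha> v \<beta> w = (\<alpha> * fst v + \<beta> * fst w, \<alpha> * snd v + \<beta> * snd w)"

definition cmul :: "complex \<Rightarrow> pt \<Rightarrow> pt" where
  "cmul t v = (t * fst v, t * snd v)"

lemma norm_pt_le: "norm (v::pt) \<le> cmod (fst v) + cmod (snd v)"
  by (metis norm_Pair_le prod.collapse)
lemma norm_fst_pt: "cmod (fst (v::pt)) \<le> norm v"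
  by (metis norm_fst_le prod.collapse)
lemma norm_snd_pt: "cmod (snd (v::pt)) \<le> norm v"
  by (metis norm_snd_le prod.collapse)

lemma det0_prop:
  fixes v w :: pt
  assumes "v \<noteq> 0" "fst v * snd w - snd v * fst w = 0"
  shows "\<exists>t. w = cmul t v"
proof (cases "fst v = 0")
  case True
  then have sv: "snd v \<noteq> 0" using assms(1) by (metis prod.collapse zero_prod_def)
  then have "fst w = 0" using assms(2) True by simp
  then show ?thesis using sv True
    by (intro exI[of _ "snd w / snd v"]) (auto simp: cmul_def prod_eq_iff)
next
  case False
  have "snd w = fst w / fst v * snd v"
  proof -
    have "fst v * snd w = snd v * fst w" using assms(2) by simp
    then show ?thesis using False by (simp add: field_simps)
  qed
  then show ?thesis using False
    by (intro exI[of _ "fst w / fst v"]) (auto simp: cmul_def prod_eq_iff)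
qed

lemma cline_cmul: assumes "t \<noteq> 0" shows "cline (cmul t v) = cline v"
proof
  show "cline (cmul t v) \<subseteq> cline v"
  proof
    fix u assume "u \<in> cline (cmul t v)"
    then obtain e where "u = (e * (t * fst v), e * (t * snd v))" by (auto simp: cline_def cmul_def)
    then show "u \<in> cline v" unfolding cline_def by (intro CollectI exI[of _ "e*t"]) auto
  qed
  show "cline v \<subseteq> cline (cmul t v)"
  proof
    fix u assume "u \<in> cline v"
    then obtain e where "u = (e * fst v, e * snd v)" by (auto simp: cline_def)
    then show "u \<in> cline (cmul t v)" unfolding cline_def cmul_def using assms
      by (intro CollectI exI[of _ "e/t"]) auto
  qed
qed

lemma cline_det0:
  fixes v w :: pt
  assumes "v \<noteq> 0" "w \<noteq> 0" "fst v * snd w - snd v * fst w = 0"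
  shows "cline v = cline w"
proof -
  obtain t where t: "w = cmul t v" using det0_prop assms by blast
  then have "t \<noteq> 0" using assms(2) by (auto simp: cmul_def zero_prod_def)
  then show ?thesis using t cline_cmul by simp
qed

lemma cline_mem: "u \<in> cline v \<longleftrightarrow> (\<exists>t. u = cmul t v)"
  unfolding cline_def cmul_def by auto

lemma inv_id1:
  fixes a b c d x y :: complex
  assumes "a*d - b*c \<noteq> 0"
  shows "a * ((d*x - b*y)/(a*d - b*c)) + b * ((a*y - c*x)/(a*d - b*c)) = x"
    and "c * ((d*x - b*y)/(a*d - b*c)) + d * ((a*y - c*x)/(a*d - b*c)) = y"
    and "(d * (a*x + b*y) - b * (c*x + d*y))/(a*d - b*c) = x"
    and "(a * (c*x + d*y) - c * (a*x + b*y))/(a*d - b*c) = y"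
proof -
  have e1: "a * (d*x - b*y) + b * (a*y - c*x) = (a*d - b*c) * x" by (simp add: algebra_simps)
  have e2: "c * (d*x - b*y) + d * (a*y - c*x) = (a*d - b*c) * y" by (simp add: algebra_simps)
  have e3: "d * (a*x + b*y) - b * (c*x + d*y) = (a*d - b*c) * x" by (simp add: algebra_simps)
  have e4: "a * (c*x + d*y) - c * (a*x + b*y) = (a*d - b*c) * y" by (simp add: algebra_simps)
  show "a * ((d*x - b*y)/(a*d - b*c)) + b * ((a*y - c*x)/(a*d - b*c)) = x"
    using assms by (simp add: times_divide_eq_right add_divide_distrib[symmetric] e1)
  show "c * ((d*x - b*y)/(a*d - b*c)) + d * ((a*y - c*x)/(a*d - b*c)) = y"
    using assms by (simp add: times_divide_eq_right add_divide_distrib[symmetric] e2)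
  show "(d * (a*x + b*y) - b * (c*x + d*y))/(a*d - b*c) = x" using assms by (simp add: e3)
  show "(a * (c*x + d*y) - c * (a*x + b*y))/(a*d - b*c) = y" using assms by (simp add: e4)
qed

locale cone_ctx =
  fixes D :: nat and G :: hmap and T :: "pt set"
    and a b c d :: "pt \<Rightarrow> complex" and s M eta K m :: real
  assumes inv: "\<And>p. p \<in> T \<Longrightarrow> aff D G p \<in> T"
    and denT: "\<And>p. p \<in> T \<Longrightarrow> den D G p \<noteq> 0"
    and dfeq: "\<And>p. p \<in> T \<Longrightarrow> Df D G p = (\<lambda>v. (a p * fst v + b p * snd v, c p * fst v + d p * snd v))"
    and ba: "\<And>p. p \<in> T \<Longrightarrow> cmod (a p) \<le> s"
    and bb: "\<And>p. p \<in> T \<Longrightarrow> cmod (b p) \<le> M"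
    and bc: "\<And>p. p \<in> T \<Longrightarrow> cmod (c p) \<le> eta"
    and bd: "\<And>p. p \<in> T \<Longrightarrow> m \<le> cmod (d p)"
    and det: "\<And>p. p \<in> T \<Longrightarrow> a p * d p - b p * c p \<noteq> 0"
    and s0: "0 \<le> s" and M0: "0 \<le> M" and eta0: "0 \<le> eta" and K0: "0 < K"
    and l1: "s + M / K < 1" and mu1: "1 < m - eta * K"
begin

definition "lc = s + M / K"
definition "mu = m - eta * K"

lemma lc0: "0 \<le> lc" using s0 M0 K0 by (simp add: lc_def)
lemma lc1: "lc < 1" using l1 by (simp add: lc_def)
lemma mu1': "1 < mu" using mu1 by (simp add: mu_def)

definition dinv :: "pt \<Rightarrow> pt \<Rightarrow> pt" where
  "dinv p w = ((d p * fst w - b p * snd w) / (a p * d p - b p * c p),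
               (a p * snd w - c p * fst w) / (a p * d p - b p * c p))"

lemma Df_dinv: "p \<in> T \<Longrightarrow> Df D G p (dinv p w) = w"
  using inv_id1(1,2)[OF det[of p]] by (simp add: dfeq dinv_def prod_eq_iff)

lemma dinv_Df: "p \<in> T \<Longrightarrow> dinv p (Df D G p v) = v"
  using inv_id1(3,4)[OF det[of p]] by (simp add: dfeq dinv_def prod_eq_iff)

lemma Df_nz: "p \<in> T \<Longrightarrow> v \<noteq> 0 \<Longrightarrow> Df D G p v \<noteq> 0"
  by (metis dinv_Df dinv_def zero_prod_def fst_conv snd_conv mult_zero_right diff_zero div_0)

lemma Df_lin: "p \<in> T \<Longrightarrow> Df D G p (lin2 x v y w) = lin2 x (Df D G p v) y (Df D G p w)"
  by (simp add: dfeq lin2_def algebra_simps)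

lemma Df_cmul: "p \<in> T \<Longrightarrow> Df D G p (cmul t v) = cmul t (Df D G p v)"
  by (simp add: dfeq cmul_def algebra_simps)

lemma dinv_lin: "dinv p (lin2 x v y w) = lin2 x (dinv p v) y (dinv p w)"
proof -
  have e: "\<And>P Q \<delta>. x*(P/\<delta>)+y*(Q/\<delta>) = (x*P+y*Q)/(\<delta>::complex)" by (simp add: add_divide_distrib)
  show ?thesis unfolding dinv_def lin2_def
    by (simp only: e prod_eq_iff fst_conv snd_conv) (simp add: algebra_simps)
qed

lemma dinv_cmul: "dinv p (cmul t v) = cmul t (dinv p v)"
  by (simp add: dinv_def cmul_def field_simps)

lemma Df_cont: "p \<in> T \<Longrightarrow> continuous_on UNIV (Df D G p)"
  by (simp add: dfeq) (intro continuous_intros)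

lemma dinv_cont: "p \<in> T \<Longrightarrow> continuous_on UNIV (dinv p)"
  unfolding dinv_def using det[of p] by (intro continuous_intros) auto

lemma step_cone:
  assumes p: "p \<in> T" and v: "cmod (fst v) \<le> K * cmod (snd v)"
  shows "mu * cmod (snd v) \<le> cmod (snd (Df D G p v))"
    and "cmod (fst (Df D G p v)) \<le> K * lc * cmod (snd v)"
proof -
  have "cmod (snd (Df D G p v)) = cmod (c p * fst v + d p * snd v)" by (simp add: dfeq p)
  also have "\<dots> \<ge> cmod (d p * snd v) - cmod (c p * fst v)"
    by (metis add.commute norm_diff_ineq)
  finally have 1: "cmod (snd (Df D G p v)) \<ge> cmod (d p) * cmod (snd v) - cmod (c p) * cmod (fst v)"
    by (simp add: norm_mult)
  have "cmod (c p) * cmod (fst v) \<le> eta * (K * cmod (snd v))"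
    using bc[OF p] v eta0 by (intro mult_mono) auto
  moreover have "m * cmod (snd v) \<le> cmod (d p) * cmod (snd v)"
    using bd[OF p] by (intro mult_right_mono) auto
  ultimately show "mu * cmod (snd v) \<le> cmod (snd (Df D G p v))" using 1
    by (simp add: mu_def algebra_simps)
  have "cmod (fst (Df D G p v)) = cmod (a p * fst v + b p * snd v)" by (simp add: dfeq p)
  also have "\<dots> \<le> cmod (a p) * cmod (fst v) + cmod (b p) * cmod (snd v)"
    by (metis norm_mult norm_triangle_ineq)
  also have "\<dots> \<le> s * (K * cmod (snd v)) + M * cmod (snd v)"
    using ba[OF p] bb[OF p] v s0 M0 by (intro add_mono mult_mono) auto
  also have "\<dots> = K * lc * cmod (snd v)" using K0 by (simp add: lc_def field_simps)
  finally show "cmod (fst (Df D G p v)) \<le> K * lc * cmod (snd v)" .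
qed

lemma step_cone2:
  assumes p: "p \<in> T" and v: "cmod (fst v) \<le> K * cmod (snd v)"
  shows "cmod (fst (Df D G p v)) \<le> K * (lc / mu) * cmod (snd (Df D G p v))"
proof -
  have "K * lc * cmod (snd v) = K * (lc / mu) * (mu * cmod (snd v))" using mu1' by simp
  also have "\<dots> \<le> K * (lc / mu) * cmod (snd (Df D G p v))"
    using step_cone(1)[OF p v] K0 lc0 mu1' by (intro mult_left_mono) auto
  finally show ?thesis using step_cone(2)[OF p v] by linarith
qed

lemma step_cone3:
  assumes p: "p \<in> T" and v: "cmod (fst v) \<le> K * cmod (snd v)"
  shows "cmod (fst (Df D G p v)) \<le> K * cmod (snd (Df D G p v))"
proof -
  have "K * (lc / mu) * cmod (snd (Df D G p v)) \<le> K * 1 * cmod (snd (Df D G p v))"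
    using K0 lc0 lc1 mu1' by (intro mult_right_mono mult_left_mono) auto
  then show ?thesis using step_cone2[OF p v] by simp
qed

lemma step_noncone:
  assumes p: "p \<in> T" and v: "K * cmod (snd v) \<le> cmod (fst v)"
  shows "cmod (fst (Df D G p v)) \<le> lc * cmod (fst v)"
proof -
  have "cmod (fst (Df D G p v)) = cmod (a p * fst v + b p * snd v)" by (simp add: dfeq p)
  also have "\<dots> \<le> cmod (a p) * cmod (fst v) + cmod (b p) * cmod (snd v)"
    by (metis norm_mult norm_triangle_ineq)
  also have "\<dots> \<le> s * cmod (fst v) + M * (cmod (fst v) / K)"
    using ba[OF p] bb[OF p] v s0 M0 K0 by (intro add_mono mult_mono) (auto simp: field_simps)
  also have "\<dots> = lc * cmod (fst v)" using K0 by (simp add: lc_def field_simps)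
  finally show ?thesis .
qed

lemma step_opencone:
  assumes p: "p \<in> T" and v: "cmod (fst v) < K * cmod (snd v)"
  shows "cmod (fst (Df D G p v)) < K * cmod (snd (Df D G p v))"
proof -
  have sv: "cmod (snd v) > 0" using v K0
    by (metis mult_zero_right norm_ge_zero not_less order_le_less_trans zero_less_norm_iff norm_zero less_irrefl)
  have "cmod (fst (Df D G p v)) \<le> K * lc * cmod (snd v)" using step_cone(2)[OF p] v by simp
  also have "\<dots> < K * mu * cmod (snd v)" using lc1 mu1' K0 sv by simp
  also have "\<dots> \<le> K * cmod (snd (Df D G p v))" using step_cone(1)[OF p] v K0 by simp
  finally show ?thesis .
qed

end

lemma norm_cmul: "norm (cmul t X) = cmod t * norm X"
proof -
  have "norm (cmul t X) = sqrt ((cmod t)^2 * ((cmod (fst X))^2 + (cmod (snd X))^2))"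
    by (simp add: cmul_def norm_Pair norm_mult power_mult_distrib algebra_simps)
  also have "\<dots> = cmod t * norm X"
    by (simp add: real_sqrt_mult norm_Pair[of "fst X" "snd X", simplified])
  finally show ?thesis .
qed

lemma lin2_eq: "lin2 x X y Y = cmul x X + cmul y Y"
  by (simp add: lin2_def cmul_def)

lemma norm_lin2: "norm (lin2 x X y Y) \<le> cmod x * norm X + cmod y * norm Y"
  unfolding lin2_eq by (metis norm_cmul norm_triangle_ineq)

context cone_ctx
begin

abbreviation "f \<equiv> aff D G"

lemma iter_T: "p \<in> T \<Longrightarrow> (f ^^ n) p \<in> T"
  by (induction n) (auto intro: inv)

lemma Dit_Suc2: "p \<in> T \<Longrightarrow> Dit D G (Suc n) p v = Df D G ((f ^^ n) p) (Dit D G n p v)"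
proof (induction n arbitrary: p v)
  case 0 then show ?case by simp
next
  case (Suc n)
  have "Dit D G (Suc (Suc n)) p v = Dit D G (Suc n) (f p) (Df D G p v)" by simp
  also have "\<dots> = Df D G ((f ^^ n) (f p)) (Dit D G n (f p) (Df D G p v))"
    using Suc.IH[of "f p"] Suc.prems inv by blast
  also have "\<dots> = Df D G ((f ^^ Suc n) p) (Dit D G (Suc n) p v)"
    by (simp add: funpow_Suc_right del: funpow.simps)
  finally show ?case .
qed

lemma Dit_add: "p \<in> T \<Longrightarrow> Dit D G (k + j) p v = Dit D G j ((f ^^ k) p) (Dit D G k p v)"
proof (induction k arbitrary: p v)
  case 0 then show ?case by simp
next
  case (Suc k)
  have "Dit D G (Suc k + j) p v = Dit D G (k + j) (f p) (Df D G p v)" by simp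
  also have "\<dots> = Dit D G j ((f ^^ k) (f p)) (Dit D G k (f p) (Df D G p v))"
    using Suc.IH[of "f p"] Suc.prems inv by blast
  also have "\<dots> = Dit D G j ((f ^^ Suc k) p) (Dit D G (Suc k) p v)"
    by (simp add: funpow_Suc_right del: funpow.simps)
  finally show ?case .
qed

lemma Dit_lin: "p \<in> T \<Longrightarrow> Dit D G n p (lin2 x v y w) = lin2 x (Dit D G n p v) y (Dit D G n p w)"
  by (induction n arbitrary: p v w) (auto simp: Df_lin inv)

lemma Dit_cmul: "p \<in> T \<Longrightarrow> Dit D G n p (cmul t v) = cmul t (Dit D G n p v)"
  by (induction n arbitrary: p v) (auto simp: Df_cmul inv)

lemma Dit_cont: "p \<in> T \<Longrightarrow> continuous_on UNIV (Dit D G n p)"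
proof (induction n arbitrary: p)
  case 0
  have "Dit D G 0 p = (\<lambda>v. v)" by (rule ext) simp
  then show ?case by (simp add: continuous_on_id)
next
  case (Suc n)
  have e: "Dit D G (Suc n) p = Dit D G n (f p) \<circ> Df D G p" by (rule ext) simp
  show ?case unfolding e
    using continuous_on_compose[OF Df_cont[OF Suc.prems] continuous_on_subset[OF Suc.IH[OF inv[OF Suc.prems]] subset_UNIV]] .
qed

lemma Dit_surj: "p \<in> T \<Longrightarrow> \<exists>u. Dit D G n p u = w"
proof (induction n arbitrary: p w)
  case 0 then show ?case by auto
next
  case (Suc n)
  obtain u where u: "Dit D G n (f p) u = w" using Suc inv by blast
  then show ?case using Df_dinv[OF Suc.prems] by (intro exI[of _ "dinv p u"]) simp
qed

definition "stab p v \<longleftrightarrow> (\<forall>n. K * cmod (snd (Dit D G n p v)) \<le> cmod (fst (Dit D G n p v)))"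

lemma stab_Df: "stab p v \<Longrightarrow> stab (f p) (Df D G p v)"
  unfolding stab_def by (metis Dit.simps(2))

lemma stab_fst: "p \<in> T \<Longrightarrow> stab p v \<Longrightarrow> cmod (fst (Dit D G n p v)) \<le> lc ^ n * cmod (fst v)"
proof (induction n arbitrary: p v)
  case 0 then show ?case by simp
next
  case (Suc n)
  have v0: "K * cmod (snd v) \<le> cmod (fst v)" using Suc.prems(2) unfolding stab_def
    by (metis Dit.simps(1))
  have "cmod (fst (Dit D G (Suc n) p v)) = cmod (fst (Dit D G n (f p) (Df D G p v)))" by simp
  also have "\<dots> \<le> lc ^ n * cmod (fst (Df D G p v))"
    using Suc.IH[of "f p" "Df D G p v"] Suc.prems inv stab_Df by blast
  also have "\<dots> \<le> lc ^ n * (lc * cmod (fst v))"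
    using step_noncone[OF Suc.prems(1) v0] lc0 by (intro mult_left_mono) auto
  finally show ?case by (simp add: ac_simps)
qed

lemma stab_norm: "p \<in> T \<Longrightarrow> stab p v \<Longrightarrow> norm (Dit D G n p v) \<le> (1 + 1/K) * lc ^ n * norm v"
proof -
  assume p: "p \<in> T" and st: "stab p v"
  let ?u = "Dit D G n p v"
  have "K * cmod (snd ?u) \<le> cmod (fst ?u)" using st unfolding stab_def by blast
  then have "cmod (snd ?u) \<le> cmod (fst ?u) / K" using K0 by (simp add: field_simps)
  then have "norm ?u \<le> (1 + 1/K) * cmod (fst ?u)"
    using norm_pt_le[of ?u] by (simp add: algebra_simps)
  also have "\<dots> \<le> (1 + 1/K) * (lc ^ n * cmod (fst v))"
    using stab_fst[OF p st] K0 by (intro mult_left_mono) auto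
  also have "\<dots> \<le> (1 + 1/K) * (lc ^ n * norm v)"
    using norm_fst_pt[of v] K0 lc0 by (intro mult_left_mono) auto
  finally show ?thesis by simp
qed

lemma cone_fwd: "p \<in> T \<Longrightarrow> cmod (fst v) \<le> K * cmod (snd v) \<Longrightarrow>
   cmod (fst (Dit D G n p v)) \<le> K * cmod (snd (Dit D G n p v)) \<and> mu ^ n * cmod (snd v) \<le> cmod (snd (Dit D G n p v))"
proof (induction n arbitrary: p v)
  case 0 then show ?case by simp
next
  case (Suc n)
  have c1: "cmod (fst (Df D G p v)) \<le> K * cmod (snd (Df D G p v))"
    using step_cone3 Suc.prems by blast
  have IH: "cmod (fst (Dit D G n (f p) (Df D G p v))) \<le> K * cmod (snd (Dit D G n (f p) (Df D G p v))) \<and>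
      mu ^ n * cmod (snd (Df D G p v)) \<le> cmod (snd (Dit D G n (f p) (Df D G p v)))"
    using Suc.IH[OF inv[OF Suc.prems(1)] c1] .
  have "mu ^ Suc n * cmod (snd v) = mu ^ n * (mu * cmod (snd v))" by simp
  also have "\<dots> \<le> mu ^ n * cmod (snd (Df D G p v))"
    using step_cone(1)[OF Suc.prems] mu1' by (intro mult_left_mono) auto
  finally show ?case using IH by simp
qed

lemma opencone_fwd: "p \<in> T \<Longrightarrow> cmod (fst v) < K * cmod (snd v) \<Longrightarrow>
   cmod (fst (Dit D G n p v)) < K * cmod (snd (Dit D G n p v))"
proof (induction n arbitrary: p v)
  case 0 then show ?case by simp
next
  case (Suc n)
  then show ?case using step_opencone[OF Suc.prems] inv by simp
qed

lemma cond_scale: "p \<in> T \<Longrightarrow> K * cmod (snd (Dit D G k p u)) \<le> cmod (fst (Dit D G k p u)) \<Longrightarrow>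
   K * cmod (snd (Dit D G k p (cmul t u))) \<le> cmod (fst (Dit D G k p (cmul t u)))"
proof -
  assume p: "p \<in> T" and h: "K * cmod (snd (Dit D G k p u)) \<le> cmod (fst (Dit D G k p u))"
  have "cmod t * (K * cmod (snd (Dit D G k p u))) \<le> cmod t * cmod (fst (Dit D G k p u))"
    using h by (intro mult_left_mono) auto
  then show ?thesis
    by (simp only: Dit_cmul[OF p]) (simp only: cmul_def fst_conv snd_conv norm_mult, simp add: algebra_simps)
qed

lemma stab_cmul: "p \<in> T \<Longrightarrow> stab p v \<Longrightarrow> stab p (cmul t v)"
  unfolding stab_def
proof
  fix n assume p: "p \<in> T" and h: "\<forall>n. K * cmod (snd (Dit D G n p v)) \<le> cmod (fst (Dit D G n p v))"
  have "cmod t * (K * cmod (snd (Dit D G n p v))) \<le> cmod t * cmod (fst (Dit D G n p v))"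
    using h by (intro mult_left_mono) auto
  then show "K * cmod (snd (Dit D G n p (cmul t v))) \<le> cmod (fst (Dit D G n p (cmul t v)))"
    by (simp only: Dit_cmul[OF p]) (simp add: cmul_def norm_mult algebra_simps)
qed

lemma stab_unique:
  assumes p: "p \<in> T" and sv: "stab p v" and sw: "stab p w" and v0: "v \<noteq> 0" and w0: "w \<noteq> 0"
  shows "fst v * snd w - snd v * fst w = 0"
proof (rule ccontr)
  define \<delta> where "\<delta> = fst v * snd w - snd v * fst w"
  assume "fst v * snd w - snd v * fst w \<noteq> 0"
  then have \<delta>: "\<delta> \<noteq> 0" by (simp add: \<delta>_def)
  define \<alpha> where "\<alpha> = - fst w / \<delta>"
  define \<beta> where "\<beta> = fst v / \<delta>"
  have e1: "- fst w / \<delta> * snd v + fst v / \<delta> * snd w = (fst v * snd w - snd v * fst w) / \<delta>"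
    using \<delta> by (simp add: field_simps)
  have e: "((0::complex), (1::complex)) = lin2 \<alpha> v \<beta> w"
    unfolding lin2_def \<alpha>_def \<beta>_def using \<delta> e1 by (simp add: prod_eq_iff \<delta>_def[symmetric])
  define B where "B = (cmod \<alpha> * norm v + cmod \<beta> * norm w) * (1 + 1/K)"
  have bnd: "mu ^ n \<le> B" for n
  proof -
    have "mu ^ n * cmod (1::complex) \<le> cmod (snd (Dit D G n p (0,1)))"
      using cone_fwd[OF p, of "(0,1)" n] K0 by simp
    also have "\<dots> \<le> norm (Dit D G n p (0,1))" by (rule norm_snd_pt)
    also have "\<dots> = norm (lin2 \<alpha> (Dit D G n p v) \<beta> (Dit D G n p w))"
      by (simp add: e Dit_lin[OF p])
    also have "\<dots> \<le> cmod \<alpha> * norm (Dit D G n p v) + cmod \<beta> * norm (Dit D G n p w)"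
      by (rule norm_lin2)
    also have "\<dots> \<le> cmod \<alpha> * ((1 + 1/K) * lc ^ n * norm v) + cmod \<beta> * ((1 + 1/K) * lc ^ n * norm w)"
      using stab_norm[OF p sv, of n] stab_norm[OF p sw, of n]
      by (intro add_mono mult_left_mono) auto
    also have "\<dots> \<le> cmod \<alpha> * ((1 + 1/K) * 1 * norm v) + cmod \<beta> * ((1 + 1/K) * 1 * norm w)"
      using lc0 lc1 K0 by (intro add_mono mult_left_mono mult_right_mono power_le_one) auto
    also have "\<dots> = B" by (simp add: B_def algebra_simps)
    finally show ?thesis by simp
  qed
  obtain n where "B < mu ^ n" using real_arch_pow[OF mu1'] by blast
  then show False using bnd[of n] by simp
qed

lemma stab_exists: assumes p: "p \<in> T" shows "\<exists>v. v \<noteq> 0 \<and> stab p v"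
proof -
  define C where "C n = {v. \<forall>k\<le>n. K * cmod (snd (Dit D G k p v)) \<le> cmod (fst (Dit D G k p v))}" for n
  have clC: "closed (C n)" for n
  proof -
    have "C n = (\<Inter>k\<in>{..n}. {v. K * cmod (snd (Dit D G k p v)) \<le> cmod (fst (Dit D G k p v))})"
      by (auto simp: C_def)
    moreover have "closed {v. K * cmod (snd (Dit D G k p v)) \<le> cmod (fst (Dit D G k p v))}" for k
      using Dit_cont[OF p, of k]
      by (intro closed_Collect_le continuous_intros) (auto intro: continuous_on_compose2[where g="\<lambda>x. x"])
    ultimately show ?thesis by auto
  qed
  have mono: "m \<le> n \<Longrightarrow> C n \<subseteq> C m" for m n by (auto simp: C_def)
  have ne: "sphere 0 1 \<inter> C n \<noteq> {}" for n
  proof -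
    obtain u where u: "Dit D G n p u = (1, 0)" using Dit_surj[OF p] by blast
    have u0: "u \<noteq> 0"
    proof
      assume "u = 0"
      then have "u = cmul 0 u" by (simp add: cmul_def zero_prod_def)
      then have "Dit D G n p u = cmul 0 (Dit D G n p u)" by (metis Dit_cmul[OF p])
      then show False using u by (simp add: cmul_def)
    qed
    have uC: "u \<in> C n"
      unfolding C_def
    proof (intro CollectI allI impI)
      fix k assume kn: "k \<le> n"
      show "K * cmod (snd (Dit D G k p u)) \<le> cmod (fst (Dit D G k p u))"
      proof (rule ccontr)
        assume "\<not> ?thesis"
        then have o: "cmod (fst (Dit D G k p u)) < K * cmod (snd (Dit D G k p u))" by simp
        have "Dit D G n p u = Dit D G (n - k) ((f ^^ k) p) (Dit D G k p u)"
          using Dit_add[OF p, of k "n - k" u] kn by simp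
        then have "cmod (fst (Dit D G n p u)) < K * cmod (snd (Dit D G n p u))"
          using opencone_fwd[OF iter_T[OF p] o] by simp
        then show False using u by simp
      qed
    qed
    define v where "v = cmul (1 / norm u) u"
    have "norm v = 1" using u0 by (simp add: v_def norm_cmul norm_divide)
    moreover have "v \<in> C n"
      using uC cond_scale[OF p] by (auto simp: C_def v_def)
    ultimately show ?thesis by auto
  qed
  have "sphere 0 1 \<inter> \<Inter>(range C) \<noteq> {}"
  proof (rule compact_imp_fip)
    show "compact (sphere (0::pt) 1)" by simp
    show "\<And>S. S \<in> range C \<Longrightarrow> closed S" using clC by auto
    fix F' assume fin: "finite F'" and sub: "F' \<subseteq> range C"
    then obtain N where N: "F' = C ` N" and finN: "finite N"
      by (meson finite_subset_image)
    define n where "n = (if N = {} then 0 else Max N)"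
    have "C n \<subseteq> \<Inter>F'"
    proof
      fix x assume x: "x \<in> C n"
      show "x \<in> \<Inter>F'"
      proof
        fix S assume "S \<in> F'"
        then obtain k where k: "k \<in> N" "S = C k" using N by blast
        then have "k \<le> n" using finN by (auto simp: n_def)
        then show "x \<in> S" using mono x k by blast
      qed
    qed
    then show "sphere 0 1 \<inter> \<Inter>F' \<noteq> {}" using ne[of n] by blast
  qed
  then obtain v where v: "v \<in> sphere 0 1" "\<And>n. v \<in> C n" by blast
  have "stab p v" unfolding stab_def using v(2) by (auto simp: C_def)
  moreover have "v \<noteq> 0" using v(1) by auto
  ultimately show ?thesis by blast
qed

end



context cone_ctx
begin

primrec bw :: "(nat \<Rightarrow> pt) \<Rightarrow> nat \<Rightarrow> pt \<Rightarrow> pt" where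
  "bw xh 0 v = v"
| "bw xh (Suc k) v = dinv (xh (Suc k)) (bw xh k v)"

lemma natT: "xh \<in> natext D G T \<Longrightarrow> xh k \<in> T"
  by (simp add: natext_def)
lemma natf: "xh \<in> natext D G T \<Longrightarrow> f (xh (Suc k)) = xh k"
  by (simp add: natext_def)

lemma bw_Df: "xh \<in> natext D G T \<Longrightarrow> Df D G (xh (Suc k)) (bw xh (Suc k) v) = bw xh k v"
  using Df_dinv natT by simp

lemma bw_lin: "bw xh k (lin2 x v y w) = lin2 x (bw xh k v) y (bw xh k w)"
  by (induction k) (auto simp: dinv_lin)

lemma bw_cmul: "bw xh k (cmul t v) = cmul t (bw xh k v)"
  by (induction k) (auto simp: dinv_cmul)

lemma bw_cont: "xh \<in> natext D G T \<Longrightarrow> continuous_on UNIV (bw xh k)"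
proof (induction k)
  case 0
  have "bw xh 0 = (\<lambda>v. v)" by (rule ext) simp
  then show ?case by (simp add: continuous_on_id)
next
  case (Suc k)
  have e: "bw xh (Suc k) = dinv (xh (Suc k)) \<circ> bw xh k" by (rule ext) simp
  show ?case unfolding e
    using continuous_on_compose[OF Suc.IH[OF Suc.prems] continuous_on_subset[OF dinv_cont[OF natT[OF Suc.prems]] subset_UNIV]] .
qed

definition "ubw xh v \<longleftrightarrow> (\<forall>k. cmod (fst (bw xh k v)) \<le> K * cmod (snd (bw xh k v)))"

lemma ubw_snd: "xh \<in> natext D G T \<Longrightarrow> ubw xh v \<Longrightarrow> cmod (snd (bw xh k v)) \<le> cmod (snd v)"
proof (induction k)
  case 0 then show ?case by simp
next
  case (Suc k)
  have c: "cmod (fst (bw xh (Suc k) v)) \<le> K * cmod (snd (bw xh (Suc k) v))"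
    using Suc.prems unfolding ubw_def by blast
  have e: "Df D G (xh (Suc k)) (bw xh (Suc k) v) = bw xh k v" by (rule bw_Df[OF Suc.prems(1)])
  have "mu * cmod (snd (bw xh (Suc k) v)) \<le> cmod (snd (Df D G (xh (Suc k)) (bw xh (Suc k) v)))"
    by (rule step_cone(1)[OF natT[OF Suc.prems(1)] c])
  then have "mu * cmod (snd (bw xh (Suc k) v)) \<le> cmod (snd (bw xh k v))" by (simp only: e)
  moreover have "cmod (snd (bw xh (Suc k) v)) \<le> mu * cmod (snd (bw xh (Suc k) v))"
    using mu1' by (simp add: mult_le_cancel_right1)
  ultimately show ?case using Suc by linarith
qed

lemma ubw_norm: "xh \<in> natext D G T \<Longrightarrow> ubw xh v \<Longrightarrow> norm (bw xh k v) \<le> (K + 1) * cmod (snd v)"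
proof -
  assume h: "xh \<in> natext D G T" "ubw xh v"
  have "cmod (fst (bw xh k v)) \<le> K * cmod (snd (bw xh k v))" using h(2) unfolding ubw_def by blast
  then have "norm (bw xh k v) \<le> K * cmod (snd (bw xh k v)) + cmod (snd (bw xh k v))"
    using norm_pt_le[of "bw xh k v"] by linarith
  also have "\<dots> = (K + 1) * cmod (snd (bw xh k v))" by (simp add: algebra_simps)
  also have "\<dots> \<le> (K + 1) * cmod (snd v)" using ubw_snd[OF h] K0 by (intro mult_left_mono) auto
  finally show ?thesis .
qed

lemma noncone_bw: "xh \<in> natext D G T \<Longrightarrow> K * cmod (snd w) < cmod (fst w) \<Longrightarrow>
   K * cmod (snd (bw xh k w)) < cmod (fst (bw xh k w)) \<and> cmod (fst w) \<le> lc ^ k * cmod (fst (bw xh k w))"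
proof (induction k)
  case 0 then show ?case by simp
next
  case (Suc k)
  let ?u = "bw xh (Suc k) w"
  have IH: "K * cmod (snd (bw xh k w)) < cmod (fst (bw xh k w))"
    "cmod (fst w) \<le> lc ^ k * cmod (fst (bw xh k w))" using Suc by auto
  have u: "K * cmod (snd ?u) < cmod (fst ?u)"
  proof (rule ccontr)
    assume "\<not> ?thesis"
    then have "cmod (fst ?u) \<le> K * cmod (snd ?u)" by simp
    then have "cmod (fst (Df D G (xh (Suc k)) ?u)) \<le> K * cmod (snd (Df D G (xh (Suc k)) ?u))"
      using step_cone3 natT[OF Suc.prems(1)] by blast
    then show False using IH(1) bw_Df[OF Suc.prems(1)] by simp
  qed
  have e: "Df D G (xh (Suc k)) ?u = bw xh k w" by (rule bw_Df[OF Suc.prems(1)])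
  have "cmod (fst (Df D G (xh (Suc k)) ?u)) \<le> lc * cmod (fst ?u)"
    by (rule step_noncone[OF natT[OF Suc.prems(1)]]) (use u in simp)
  then have "cmod (fst (bw xh k w)) \<le> lc * cmod (fst ?u)" by (simp only: e)
  then have "lc ^ k * cmod (fst (bw xh k w)) \<le> lc ^ k * (lc * cmod (fst ?u))"
    using lc0 by (intro mult_left_mono) auto
  then show ?case using IH(2) u by (simp add: ac_simps)
qed

lemma ubw_unique:
  assumes xh: "xh \<in> natext D G T" and sv: "ubw xh v" and sw: "ubw xh w" and v0: "v \<noteq> 0" and w0: "w \<noteq> 0"
  shows "fst v * snd w - snd v * fst w = 0"
proof (rule ccontr)
  define \<delta> where "\<delta> = fst v * snd w - snd v * fst w"
  assume "fst v * snd w - snd v * fst w \<noteq> 0"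
  then have \<delta>: "\<delta> \<noteq> 0" by (simp add: \<delta>_def)
  define \<alpha> where "\<alpha> = snd w / \<delta>"
  define \<beta> where "\<beta> = - snd v / \<delta>"
  have e1: "snd w / \<delta> * fst v + - snd v / \<delta> * fst w = (fst v * snd w - snd v * fst w) / \<delta>"
    using \<delta> by (simp add: field_simps)
  have e2: "snd w / \<delta> * snd v + - snd v / \<delta> * snd w = 0"
    using \<delta> by (simp add: field_simps)
  have e: "((1::complex), (0::complex)) = lin2 \<alpha> v \<beta> w"
    unfolding lin2_def \<alpha>_def \<beta>_def using \<delta> e1 e2 by (simp add: prod_eq_iff \<delta>_def[symmetric])
  define B where "B = cmod \<alpha> * ((K + 1) * cmod (snd v)) + cmod \<beta> * ((K + 1) * cmod (snd w))"
  have B0: "0 \<le> B" using K0 by (simp add: B_def)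
  have bnd: "1 \<le> lc ^ k * B" for k
  proof -
    have "cmod (1::complex) \<le> lc ^ k * cmod (fst (bw xh k (1,0)))"
      using noncone_bw[OF xh, of "(1,0)" k] by simp
    also have "\<dots> \<le> lc ^ k * norm (bw xh k (1,0))"
      using lc0 norm_fst_pt by (intro mult_left_mono) auto
    also have "\<dots> \<le> lc ^ k * B"
    proof (intro mult_left_mono)
      have "norm (bw xh k (1,0)) = norm (lin2 \<alpha> (bw xh k v) \<beta> (bw xh k w))"
        by (simp add: e bw_lin)
      also have "\<dots> \<le> cmod \<alpha> * norm (bw xh k v) + cmod \<beta> * norm (bw xh k w)"
        by (rule norm_lin2)
      also have "\<dots> \<le> B" unfolding B_def
        using ubw_norm[OF xh sv, of k] ubw_norm[OF xh sw, of k]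
        by (intro add_mono mult_left_mono) auto
      finally show "norm (bw xh k (1,0)) \<le> B" .
    qed (use lc0 in auto)
    finally show ?thesis by simp
  qed
  obtain k where k: "lc ^ k < 1 / (B + 1)" using real_arch_pow_inv[of "1 / (B + 1)" lc] lc1 B0 by auto
  have "lc ^ k * B \<le> lc ^ k * (B + 1)" using lc0 by (intro mult_left_mono) auto
  also have "\<dots> < 1" using k B0 by (simp add: field_simps)
  finally show False using bnd[of k] by simp
qed

lemma iter_nat: "xh \<in> natext D G T \<Longrightarrow> j \<le> n \<Longrightarrow> (f ^^ j) (xh n) = xh (n - j)"
proof (induction j)
  case 0 then show ?case by simp
next
  case (Suc j)
  then have "(f ^^ Suc j) (xh n) = f (xh (n - j))" by simp
  also have "\<dots> = xh (n - Suc j)" using natf[OF Suc.prems(1), of "n - Suc j"] Suc.prems(2)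
    by (simp add: Suc_diff_Suc)
  finally show ?case .
qed

lemma bw_Dit: assumes xh: "xh \<in> natext D G T" shows "k \<le> n \<Longrightarrow> bw xh k (Dit D G n (xh n) e) = Dit D G (n - k) (xh n) e"
proof (induction k)
  case 0 then show ?case by simp
next
  case (Suc k)
  have "Dit D G (n - k) (xh n) e = Dit D G (Suc (n - Suc k)) (xh n) e"
    using Suc.prems by (simp add: Suc_diff_Suc)
  also have "\<dots> = Df D G ((f ^^ (n - Suc k)) (xh n)) (Dit D G (n - Suc k) (xh n) e)"
    by (rule Dit_Suc2[OF natT[OF xh]])
  also have "(f ^^ (n - Suc k)) (xh n) = xh (Suc k)"
    using iter_nat[OF xh, of "n - Suc k" n] Suc.prems by simp
  finally have "Dit D G (n - k) (xh n) e = Df D G (xh (Suc k)) (Dit D G (n - Suc k) (xh n) e)" .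
  then show ?case using Suc dinv_Df[OF natT[OF xh]] by simp
qed

lemma ubw_exists: assumes xh: "xh \<in> natext D G T" shows "\<exists>v. v \<noteq> 0 \<and> ubw xh v"
proof -
  define C where "C n = {v. \<forall>k\<le>n. cmod (fst (bw xh k v)) \<le> K * cmod (snd (bw xh k v))}" for n
  have clC: "closed (C n)" for n
  proof -
    have "C n = (\<Inter>k\<in>{..n}. {v. cmod (fst (bw xh k v)) \<le> K * cmod (snd (bw xh k v))})"
      by (auto simp: C_def)
    moreover have "closed {v. cmod (fst (bw xh k v)) \<le> K * cmod (snd (bw xh k v))}" for k
      using bw_cont[OF xh, of k]
      by (intro closed_Collect_le continuous_intros) (auto intro: continuous_on_compose2[where g="\<lambda>x. x"])
    ultimately show ?thesis by auto
  qed
  have mono: "m \<le> n \<Longrightarrow> C n \<subseteq> C m" for m n by (auto simp: C_def)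
  have cs: "cmod (fst (bw xh k u)) \<le> K * cmod (snd (bw xh k u)) \<Longrightarrow>
     cmod (fst (bw xh k (cmul t u))) \<le> K * cmod (snd (bw xh k (cmul t u)))" for k u t
  proof -
    assume h: "cmod (fst (bw xh k u)) \<le> K * cmod (snd (bw xh k u))"
    have "cmod t * cmod (fst (bw xh k u)) \<le> cmod t * (K * cmod (snd (bw xh k u)))"
      using h by (intro mult_left_mono) auto
    then show ?thesis
      by (simp only: bw_cmul) (simp only: cmul_def fst_conv snd_conv norm_mult, simp add: algebra_simps)
  qed
  have ne: "sphere 0 1 \<inter> C n \<noteq> {}" for n
  proof -
    define u where "u = Dit D G n (xh n) (0, 1)"
    have cu: "cmod (fst (Dit D G j (xh n) (0,1))) \<le> K * cmod (snd (Dit D G j (xh n) (0,1))) \<and>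
         mu ^ j * cmod (snd (0::complex, 1::complex)) \<le> cmod (snd (Dit D G j (xh n) (0,1)))" for j
      using cone_fwd[OF natT[OF xh], of "(0,1)"] K0 by simp
    have u0: "u \<noteq> 0"
    proof
      assume "u = 0"
      moreover have "0 < mu ^ n" using mu1' by simp
      ultimately show False using cu[of n] by (simp add: u_def)
    qed
    have uC: "u \<in> C n" unfolding C_def u_def using bw_Dit[OF xh] cu by auto
    define v where "v = cmul (1 / norm u) u"
    have "norm v = 1" using u0 by (simp add: v_def norm_cmul norm_divide)
    moreover have "v \<in> C n" using uC cs by (auto simp: C_def v_def)
    ultimately show ?thesis by auto
  qed
  have "sphere 0 1 \<inter> \<Inter>(range C) \<noteq> {}"
  proof (rule compact_imp_fip)
    show "compact (sphere (0::pt) 1)" by simp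
    show "\<And>S. S \<in> range C \<Longrightarrow> closed S" using clC by auto
    fix F' assume fin: "finite F'" and sub: "F' \<subseteq> range C"
    then obtain N where N: "F' = C ` N" and finN: "finite N"
      by (meson finite_subset_image)
    define n where "n = (if N = {} then 0 else Max N)"
    have "C n \<subseteq> \<Inter>F'"
    proof
      fix x assume x: "x \<in> C n"
      show "x \<in> \<Inter>F'"
      proof
        fix S assume "S \<in> F'"
        then obtain k where k: "k \<in> N" "S = C k" using N by blast
        then have "k \<le> n" using finN by (auto simp: n_def)
        then show "x \<in> S" using mono x k by blast
      qed
    qed
    then show "sphere 0 1 \<inter> \<Inter>F' \<noteq> {}" using ne[of n] by blast
  qed
  then obtain v where v: "v \<in> sphere 0 1" "\<And>n. v \<in> C n" by blast
  have "ubw xh v" unfolding ubw_def using v(2) by (auto simp: C_def)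
  moreover have "v \<noteq> 0" using v(1) by auto
  ultimately show ?thesis by blast
qed

lemma shift_nat: "xh \<in> natext D G T \<Longrightarrow> shift D G xh \<in> natext D G T"
proof -
  assume xh: "xh \<in> natext D G T"
  then have "den D G (xh 0) \<noteq> 0" "aff D G (xh 0) \<in> T" using denT inv natT by auto
  then show ?thesis using xh unfolding natext_def shift_def
    by (auto split: nat.splits)
qed

lemma bw_shift: assumes xh: "xh \<in> natext D G T"
  shows "bw (shift D G xh) (Suc k) (Df D G (xh 0) v) = bw xh k v"
proof (induction k)
  case 0 then show ?case using dinv_Df[OF natT[OF xh]] by (simp add: shift_def)
next
  case (Suc k) then show ?case by (simp add: shift_def)
qed

lemma ubw_shift: assumes xh: "xh \<in> natext D G T" and u: "ubw xh v"
  shows "ubw (shift D G xh) (Df D G (xh 0) v)"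
  unfolding ubw_def
proof
  fix k show "cmod (fst (bw (shift D G xh) k (Df D G (xh 0) v))) \<le> K * cmod (snd (bw (shift D G xh) k (Df D G (xh 0) v)))"
  proof (cases k)
    case 0
    have "cmod (fst v) \<le> K * cmod (snd v)" using u unfolding ubw_def by (metis bw.simps(1))
    then show ?thesis using 0 step_cone3[OF natT[OF xh]] by simp
  next
    case (Suc j) then show ?thesis using bw_shift[OF xh] u unfolding ubw_def by simp
  qed
qed

lemma Df_cline: "p \<in> T \<Longrightarrow> Df D G p ` cline v = cline (Df D G p v)"
proof -
  assume p: "p \<in> T"
  have "Df D G p ` cline v = (\<lambda>t. Df D G p (cmul t v)) ` UNIV"
    unfolding cline_def cmul_def by auto
  also have "\<dots> = (\<lambda>t. cmul t (Df D G p v)) ` UNIV" using Df_cmul[OF p] by simp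
  also have "\<dots> = cline (Df D G p v)" unfolding cline_def cmul_def by auto
  finally show ?thesis .
qed

definition "Es xh = (SOME v. v \<noteq> 0 \<and> stab (xh 0) v)"
definition "Eu xh = (SOME v. v \<noteq> 0 \<and> ubw xh v)"

lemma Es_prop: "xh \<in> natext D G T \<Longrightarrow> Es xh \<noteq> 0 \<and> stab (xh 0) (Es xh)"
  unfolding Es_def by (rule someI_ex) (rule stab_exists[OF natT])

lemma Eu_prop: "xh \<in> natext D G T \<Longrightarrow> Eu xh \<noteq> 0 \<and> ubw xh (Eu xh)"
  unfolding Eu_def by (rule someI_ex) (rule ubw_exists)

theorem hyp: "hyp_saddle D G T"
proof -
  define C where "C = K + 1 + 1 / K"
  define L where "L = max lc (1 / mu)"
  have C0: "C > 0" using K0 by (simp add: C_def add_pos_pos)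
  have L0: "0 < L" using mu1' by (simp add: L_def less_max_iff_disj)
  have L1: "L < 1" using lc1 mu1' by (simp add: L_def)
  have lcL: "lc \<le> L" by (simp add: L_def)
  have Lmu: "1 / L \<le> mu"
  proof -
    have "1 / mu \<le> L" by (simp add: L_def)
    then show ?thesis using L0 mu1' by (simp add: field_simps)
  qed
  show ?thesis unfolding hyp_saddle_def
  proof (rule exI[of _ C], rule exI[of _ L], rule exI[of _ Es], rule exI[of _ Eu], intro conjI ballI C0 L0 L1)
    fix xh assume xh: "xh \<in> natext D G T"
    have p0: "xh 0 \<in> T" using natT[OF xh] .
    have sh: "shift D G xh \<in> natext D G T" using shift_nat[OF xh] .
    have sh0: "shift D G xh 0 = f (xh 0)" by (simp add: shift_def)
    note es = Es_prop[OF xh] and eu = Eu_prop[OF xh]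
    note es' = Es_prop[OF sh] and eu' = Eu_prop[OF sh]
    show "Es xh \<noteq> 0" using es by auto
    show "Eu xh \<noteq> 0" using eu by auto
    have sK: "K * cmod (snd (Es xh)) \<le> cmod (fst (Es xh))"
      using es unfolding stab_def by (metis Dit.simps(1))
    have u1: "cmod (fst (bw xh (Suc 0) (Eu xh))) \<le> K * cmod (snd (bw xh (Suc 0) (Eu xh)))"
      using eu unfolding ubw_def by blast
    have e: "Df D G (xh (Suc 0)) (bw xh (Suc 0) (Eu xh)) = bw xh 0 (Eu xh)" by (rule bw_Df[OF xh])
    have "cmod (fst (Df D G (xh (Suc 0)) (bw xh (Suc 0) (Eu xh))))
       \<le> K * (lc / mu) * cmod (snd (Df D G (xh (Suc 0)) (bw xh (Suc 0) (Eu xh))))"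
      by (rule step_cone2[OF natT[OF xh] u1])
    then have uK: "cmod (fst (Eu xh)) \<le> K * (lc / mu) * cmod (snd (Eu xh))"
      by (simp only: e bw.simps(1))
    show "fst (Es xh) * snd (Eu xh) - snd (Es xh) * fst (Eu xh) \<noteq> 0"
    proof
      assume "fst (Es xh) * snd (Eu xh) - snd (Es xh) * fst (Eu xh) = 0"
      then have "fst (Es xh) * snd (Eu xh) = snd (Es xh) * fst (Eu xh)" by simp
      then have "cmod (fst (Es xh) * snd (Eu xh)) = cmod (snd (Es xh) * fst (Eu xh))" by simp
      then have "cmod (fst (Es xh)) * cmod (snd (Eu xh)) = cmod (snd (Es xh)) * cmod (fst (Eu xh))"
        by (simp add: norm_mult)
      also have "\<dots> \<le> cmod (snd (Es xh)) * (K * (lc / mu) * cmod (snd (Eu xh)))"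
        using uK by (intro mult_left_mono) auto
      also have "\<dots> = (K * cmod (snd (Es xh))) * (lc / mu) * cmod (snd (Eu xh))" by simp
      also have "\<dots> \<le> cmod (fst (Es xh)) * (lc / mu) * cmod (snd (Eu xh))"
        using sK lc0 mu1' by (intro mult_right_mono) auto
      finally have "cmod (fst (Es xh)) * cmod (snd (Eu xh)) * (1 - lc / mu) \<le> 0"
        by (simp add: algebra_simps)
      moreover have "1 - lc / mu > 0" using lc1 mu1' by (simp add: field_simps)
      ultimately have "cmod (fst (Es xh)) * cmod (snd (Eu xh)) \<le> 0"
        by (simp add: mult_le_0_iff)
      moreover have "0 \<le> cmod (fst (Es xh)) * cmod (snd (Eu xh))" by simp
      ultimately have "cmod (fst (Es xh)) * cmod (snd (Eu xh)) = 0" by linarith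
      then have "fst (Es xh) = 0 \<or> snd (Eu xh) = 0" by simp
      then show False
      proof
        assume "fst (Es xh) = 0"
        then have "K * cmod (snd (Es xh)) \<le> 0" using sK by simp
        then have "snd (Es xh) = 0" using K0 by (simp add: mult_le_0_iff)
        then show False using es `fst (Es xh) = 0` by (simp add: prod_eq_iff)
      next
        assume "snd (Eu xh) = 0"
        then have "fst (Eu xh) = 0" using uK by simp
        then show False using eu `snd (Eu xh) = 0` by (simp add: prod_eq_iff)
      qed
    qed
    show "Df D G (xh 0) ` cline (Es xh) = cline (Es (shift D G xh))"
    proof -
      have A: "stab (f (xh 0)) (Df D G (xh 0) (Es xh))" using stab_Df es by blast
      have B: "Df D G (xh 0) (Es xh) \<noteq> 0" using Df_nz[OF p0] es by blast
      have A2: "stab (f (xh 0)) (Es (shift D G xh))" using es' sh0 by metis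
      have C: "Es (shift D G xh) \<noteq> 0" using es' by blast
      have "cline (Df D G (xh 0) (Es xh)) = cline (Es (shift D G xh))"
        by (rule cline_det0[OF B C stab_unique[OF inv[OF p0] A A2 B C]])
      then show ?thesis using Df_cline[OF p0] by simp
    qed
    show "Df D G (xh 0) ` cline (Eu xh) = cline (Eu (shift D G xh))"
    proof -
      have A: "ubw (shift D G xh) (Df D G (xh 0) (Eu xh))" using ubw_shift[OF xh] eu by blast
      have B: "Df D G (xh 0) (Eu xh) \<noteq> 0" using Df_nz[OF p0] eu by blast
      have A2: "ubw (shift D G xh) (Eu (shift D G xh))" using eu' by blast
      have C: "Eu (shift D G xh) \<noteq> 0" using eu' by blast
      have "cline (Df D G (xh 0) (Eu xh)) = cline (Eu (shift D G xh))"
        by (rule cline_det0[OF B C ubw_unique[OF sh A A2 B C]])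
      then show ?thesis using Df_cline[OF p0] by simp
    qed
    show "\<forall>n v. v \<in> cline (Es xh) \<longrightarrow> norm (Dit D G n (xh 0) v) \<le> C * L ^ n * norm v"
    proof (intro allI impI)
      fix n v assume "v \<in> cline (Es xh)"
      then obtain t where t: "v = cmul t (Es xh)" by (auto simp: cline_mem)
      have "stab (xh 0) v" using stab_cmul[OF p0] es t by blast
      then have "norm (Dit D G n (xh 0) v) \<le> (1 + 1/K) * lc ^ n * norm v" using stab_norm[OF p0] by blast
      also have "\<dots> \<le> C * L ^ n * norm v"
        using K0 lc0 lcL by (intro mult_right_mono mult_mono power_mono) (auto simp: C_def)
      finally show "norm (Dit D G n (xh 0) v) \<le> C * L ^ n * norm v" .
    qed
    show "\<forall>n v. v \<in> cline (Eu xh) \<longrightarrow> norm (Dit D G n (xh 0) v) \<ge> (1 / C) * (1 / L) ^ n * norm v"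
    proof (intro allI impI)
      fix n v assume "v \<in> cline (Eu xh)"
      then obtain t where t: "v = cmul t (Eu xh)" by (auto simp: cline_mem)
      have "cmod (fst (Eu xh)) \<le> K * cmod (snd (Eu xh))" using eu unfolding ubw_def by (metis bw.simps(1))
      then have "cmod t * cmod (fst (Eu xh)) \<le> cmod t * (K * cmod (snd (Eu xh)))" by (intro mult_left_mono) auto
      then have cv: "cmod (fst v) \<le> K * cmod (snd v)" by (simp add: t cmul_def norm_mult algebra_simps)
      have nv: "norm v \<le> (K + 1) * cmod (snd v)"
        using norm_pt_le[of v] cv by (simp add: algebra_simps)
      have "(1 / C) * norm v \<le> cmod (snd v)"
      proof -
        have "(1 / C) * norm v \<le> (1 / C) * ((K + 1) * cmod (snd v))" using nv C0 by (intro mult_left_mono) auto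
        also have "\<dots> \<le> cmod (snd v)"
        proof -
          have "(K + 1) \<le> C" using K0 by (simp add: C_def)
          then have "(K + 1) * cmod (snd v) \<le> C * cmod (snd v)" by (intro mult_right_mono) auto
          then show ?thesis using C0 by (simp add: field_simps)
        qed
        finally show ?thesis .
      qed
      then have "(1 / L) ^ n * ((1 / C) * norm v) \<le> mu ^ n * cmod (snd v)"
        using Lmu L0 mu1' C0 by (intro mult_mono power_mono) auto
      also have "\<dots> \<le> cmod (snd (Dit D G n (xh 0) v))" using cone_fwd[OF p0 cv] by blast
      also have "\<dots> \<le> norm (Dit D G n (xh 0) v)" by (rule norm_snd_pt)
      finally show "norm (Dit D G n (xh 0) v) \<ge> (1 / C) * (1 / L) ^ n * norm v" by (simp add: ac_simps)
    qed
  qed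
qed

end


definition Sg :: "nat \<Rightarrow> (nat \<times> nat) set" where "Sg D = (SIGMA i:{..D}. {..D-i})"

definition hvx :: "nat \<Rightarrow> (nat \<times> nat \<Rightarrow> complex) \<Rightarrow> complex \<Rightarrow> complex \<Rightarrow> complex" where
  "hvx D a x y = (\<Sum>k\<in>Sg D. a k * (of_nat (fst k) * x ^ (fst k - 1)) * y ^ snd k)"
definition hvy :: "nat \<Rightarrow> (nat \<times> nat \<Rightarrow> complex) \<Rightarrow> complex \<Rightarrow> complex \<Rightarrow> complex" where
  "hvy D a x y = (\<Sum>k\<in>Sg D. a k * x ^ fst k * (of_nat (snd k) * y ^ (snd k - 1)))"

lemma finite_Sg: "finite (Sg D)" by (simp add: Sg_def)

lemma Sg_le: "k \<in> Sg D \<Longrightarrow> fst k + snd k \<le> D" by (auto simp: Sg_def)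

lemma hev1: "hev D a x y 1 = (\<Sum>k\<in>Sg D. a k * x ^ fst k * y ^ snd k)"
  unfolding hev_def Sg_def by (simp add: case_prod_beta)

lemma mono_deriv:
  "((\<lambda>p::pt. c * fst p ^ i * snd p ^ j) has_derivative
     (\<lambda>v. c * (of_nat i * fst p ^ (i - 1)) * snd p ^ j * fst v + c * fst p ^ i * (of_nat j * snd p ^ (j - 1)) * snd v)) (at p)"
proof -
  have "((\<lambda>p::pt. c * fst p ^ i * snd p ^ j) has_derivative
     (\<lambda>v. c * (of_nat i * fst v * fst p ^ (i - 1)) * snd p ^ j + c * fst p ^ i * (of_nat j * snd v * snd p ^ (j - 1)))) (at p)"
    by (intro derivative_eq_intros) (auto simp: algebra_simps)
  then show ?thesis by (simp add: algebra_simps)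
qed

lemma hv_deriv: "((\<lambda>p. hev D a (fst p) (snd p) 1) has_derivative
   (\<lambda>v. hvx D a (fst p) (snd p) * fst v + hvy D a (fst p) (snd p) * snd v)) (at p)"
proof -
  have "((\<lambda>p. \<Sum>k\<in>Sg D. a k * fst p ^ fst k * snd p ^ snd k) has_derivative
    (\<lambda>v. \<Sum>k\<in>Sg D. a k * (of_nat (fst k) * fst p ^ (fst k - 1)) * snd p ^ snd k * fst v
          + a k * fst p ^ fst k * (of_nat (snd k) * snd p ^ (snd k - 1)) * snd v)) (at p)"
    by (intro has_derivative_sum mono_deriv)
  moreover have "(\<lambda>v. \<Sum>k\<in>Sg D. a k * (of_nat (fst k) * fst p ^ (fst k - 1)) * snd p ^ snd k * fst v
          + a k * fst p ^ fst k * (of_nat (snd k) * snd p ^ (snd k - 1)) * snd v)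
     = (\<lambda>v. hvx D a (fst p) (snd p) * fst v + hvy D a (fst p) (snd p) * snd v)"
    by (rule ext) (simp add: hvx_def hvy_def sum.distrib sum_distrib_right)
  ultimately show ?thesis by (simp add: hev1)
qed

lemma hv_deriv_x: "((\<lambda>x. hev D a x y 1) has_field_derivative hvx D a x y) (at x)"
proof -
  have "((\<lambda>x. \<Sum>k\<in>Sg D. a k * x ^ fst k * y ^ snd k) has_field_derivative
       (\<Sum>k\<in>Sg D. a k * (of_nat (fst k) * x ^ (fst k - 1)) * y ^ snd k)) (at x)"
    by (intro DERIV_sum) (auto intro!: derivative_eq_intros simp: algebra_simps)
  then show ?thesis by (simp add: hev1 hvx_def)
qed

lemma hv_deriv_y: "((\<lambda>y. hev D a x y 1) has_field_derivative hvy D a x y) (at y)"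
proof -
  have "((\<lambda>y. \<Sum>k\<in>Sg D. a k * x ^ fst k * y ^ snd k) has_field_derivative
       (\<Sum>k\<in>Sg D. a k * x ^ fst k * (of_nat (snd k) * y ^ (snd k - 1)))) (at y)"
    by (intro DERIV_sum) (auto intro!: derivative_eq_intros simp: algebra_simps)
  then show ?thesis by (simp add: hev1 hvy_def)
qed

lemma qa_lin: "Q \<noteq> 0 \<Longrightarrow> ((A*x + B*y)*S - U*(C*x + E*y))/Q = (A*S - U*C)/Q * x + (B*S - U*E)/Q*(y::complex)"
  by (simp add: field_simps)

definition qa :: "complex \<Rightarrow> complex \<Rightarrow> complex \<Rightarrow> complex \<Rightarrow> complex" where
  "qa Ux U S Sx = (Ux * S - U * Sx) / (S * S)"

lemma Df_formula:
  assumes S: "den D G p \<noteq> 0"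
  shows "Df D G p = (\<lambda>v.
    (qa (hvx D (P1 G) (fst p) (snd p)) (hev D (P1 G) (fst p) (snd p) 1) (den D G p) (hvx D (P3 G) (fst p) (snd p)) * fst v
     + qa (hvy D (P1 G) (fst p) (snd p)) (hev D (P1 G) (fst p) (snd p) 1) (den D G p) (hvy D (P3 G) (fst p) (snd p)) * snd v,
     qa (hvx D (P2 G) (fst p) (snd p)) (hev D (P2 G) (fst p) (snd p) 1) (den D G p) (hvx D (P3 G) (fst p) (snd p)) * fst v
     + qa (hvy D (P2 G) (fst p) (snd p)) (hev D (P2 G) (fst p) (snd p) 1) (den D G p) (hvy D (P3 G) (fst p) (snd p)) * snd v))"
  (is "_ = ?rhs")
proof -
  let ?U = "\<lambda>p. hev D (P1 G) (fst p) (snd p) 1"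
  let ?V = "\<lambda>p. hev D (P2 G) (fst p) (snd p) 1"
  let ?S = "\<lambda>p. hev D (P3 G) (fst p) (snd p) 1"
  have e: "aff D G = (\<lambda>p. (?U p / ?S p, ?V p / ?S p))"
    by (rule ext) (simp add: aff_def den_def)
  have S': "?S p \<noteq> 0" using S by (simp add: den_def)
  have "(aff D G has_derivative (\<lambda>h.
     (((hvx D (P1 G) (fst p) (snd p) * fst h + hvy D (P1 G) (fst p) (snd p) * snd h) * ?S p
        - ?U p * (hvx D (P3 G) (fst p) (snd p) * fst h + hvy D (P3 G) (fst p) (snd p) * snd h)) / (?S p * ?S p),
      ((hvx D (P2 G) (fst p) (snd p) * fst h + hvy D (P2 G) (fst p) (snd p) * snd h) * ?S p
        - ?V p * (hvx D (P3 G) (fst p) (snd p) * fst h + hvy D (P3 G) (fst p) (snd p) * snd h)) / (?S p * ?S p)))) (at p)"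
    unfolding e
    by (intro has_derivative_Pair has_derivative_divide' hv_deriv S')
  then have "Df D G p = (\<lambda>h.
     (((hvx D (P1 G) (fst p) (snd p) * fst h + hvy D (P1 G) (fst p) (snd p) * snd h) * ?S p
        - ?U p * (hvx D (P3 G) (fst p) (snd p) * fst h + hvy D (P3 G) (fst p) (snd p) * snd h)) / (?S p * ?S p),
      ((hvx D (P2 G) (fst p) (snd p) * fst h + hvy D (P2 G) (fst p) (snd p) * snd h) * ?S p
        - ?V p * (hvx D (P3 G) (fst p) (snd p) * fst h + hvy D (P3 G) (fst p) (snd p) * snd h)) / (?S p * ?S p)))"
    unfolding Df_def by (rule frechet_derivative_at[symmetric])
  also have "\<dots> = ?rhs"
  proof (rule ext)
    fix h
    have SS: "?S p * ?S p \<noteq> 0" using S' by simp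
    show "(\<lambda>h.
     (((hvx D (P1 G) (fst p) (snd p) * fst h + hvy D (P1 G) (fst p) (snd p) * snd h) * ?S p
        - ?U p * (hvx D (P3 G) (fst p) (snd p) * fst h + hvy D (P3 G) (fst p) (snd p) * snd h)) / (?S p * ?S p),
      ((hvx D (P2 G) (fst p) (snd p) * fst h + hvy D (P2 G) (fst p) (snd p) * snd h) * ?S p
        - ?V p * (hvx D (P3 G) (fst p) (snd p) * fst h + hvy D (P3 G) (fst p) (snd p) * snd h)) / (?S p * ?S p))) h = ?rhs h"
      by (simp only: qa_def den_def prod_eq_iff fst_conv snd_conv qa_lin[OF SS])
  qed
  finally show ?thesis .
qed


definition Wt :: "nat \<Rightarrow> (nat \<times> nat \<Rightarrow> complex) \<Rightarrow> real \<Rightarrow> real" where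
  "Wt D c R = (\<Sum>k\<in>Sg D. cmod (c k) * (1 + real (fst k) + real (snd k)) * R ^ (fst k + snd k))"

definition Wt1 :: "nat \<Rightarrow> real \<Rightarrow> real" where
  "Wt1 D R = (\<Sum>k\<in>Sg D. (1 + real (fst k) + real (snd k)) * R ^ (fst k + snd k))"

lemma pow_le_R: "1 \<le> R \<Longrightarrow> cmod x \<le> R \<Longrightarrow> cmod x ^ i \<le> R ^ i"
  by (intro power_mono) auto

lemma le_mult1: "0 \<le> (X::real) \<Longrightarrow> 1 \<le> c \<Longrightarrow> X \<le> c * X"
  using mult_right_mono[of 1 c X] by simp

lemma hv_bound:
  assumes R: "1 \<le> R" and x: "cmod x \<le> R" and y: "cmod y \<le> R"
  shows "cmod (hev D c x y 1) \<le> Wt D c R" "cmod (hvx D c x y) \<le> Wt D c R" "cmod (hvy D c x y) \<le> Wt D c R"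
proof -
  have px: "cmod x ^ i \<le> R ^ i" for i using pow_le_R[OF R x] .
  have py: "cmod y ^ i \<le> R ^ i" for i using pow_le_R[OF R y] .
  have R0: "0 \<le> R" using R by simp
  have t1: "cmod (c k * x ^ fst k * y ^ snd k) \<le> cmod (c k) * (1 + real (fst k) + real (snd k)) * R ^ (fst k + snd k)" for k
  proof -
    have "cmod (c k * x ^ fst k * y ^ snd k) = cmod (c k) * (cmod x ^ fst k * cmod y ^ snd k)"
      by (simp add: norm_mult norm_power)
    also have "\<dots> \<le> cmod (c k) * (R ^ fst k * R ^ snd k)"
      using px py R0 by (intro mult_left_mono mult_mono) auto
    also have "\<dots> \<le> cmod (c k) * ((1 + real (fst k) + real (snd k)) * R ^ (fst k + snd k))"
      using R0 by (intro mult_left_mono) (auto simp: power_add intro!: le_mult1)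
    finally show ?thesis by (simp add: mult.assoc)
  qed
  show "cmod (hev D c x y 1) \<le> Wt D c R"
    unfolding hev1 Wt_def by (rule order_trans[OF norm_sum sum_mono]) (rule t1)
  have t2: "cmod (c k * (of_nat (fst k) * x ^ (fst k - 1)) * y ^ snd k) \<le> cmod (c k) * (1 + real (fst k) + real (snd k)) * R ^ (fst k + snd k)" for k
  proof -
    have "cmod (c k * (of_nat (fst k) * x ^ (fst k - 1)) * y ^ snd k) = cmod (c k) * (real (fst k) * cmod x ^ (fst k - 1) * cmod y ^ snd k)"
      by (simp add: norm_mult norm_power)
    also have "\<dots> \<le> cmod (c k) * (real (fst k) * R ^ (fst k) * R ^ snd k)"
    proof (intro mult_left_mono mult_mono)
      show "cmod x ^ (fst k - 1) \<le> R ^ fst k"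
        using px[of "fst k - 1"] R by (meson diff_le_self order_trans power_increasing)
    qed (use py R0 in auto)
    also have "\<dots> \<le> cmod (c k) * ((1 + real (fst k) + real (snd k)) * R ^ (fst k + snd k))"
      using R0 by (intro mult_left_mono) (simp add: power_add mult.assoc[symmetric], intro mult_right_mono, auto)
    finally show ?thesis by (simp add: mult.assoc)
  qed
  show "cmod (hvx D c x y) \<le> Wt D c R"
    unfolding hvx_def Wt_def by (rule order_trans[OF norm_sum sum_mono]) (rule t2)
  have t3: "cmod (c k * x ^ fst k * (of_nat (snd k) * y ^ (snd k - 1))) \<le> cmod (c k) * (1 + real (fst k) + real (snd k)) * R ^ (fst k + snd k)" for k
  proof -
    have "cmod (c k * x ^ fst k * (of_nat (snd k) * y ^ (snd k - 1))) = cmod (c k) * (real (snd k) * cmod x ^ fst k * cmod y ^ (snd k - 1))"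
      by (simp add: norm_mult norm_power)
    also have "\<dots> \<le> cmod (c k) * (real (snd k) * R ^ (fst k) * R ^ snd k)"
    proof (intro mult_left_mono mult_mono)
      show "cmod y ^ (snd k - 1) \<le> R ^ snd k"
        using py[of "snd k - 1"] R by (meson diff_le_self order_trans power_increasing)
    qed (use px R0 in auto)
    also have "\<dots> \<le> cmod (c k) * ((1 + real (fst k) + real (snd k)) * R ^ (fst k + snd k))"
      using R0 by (intro mult_left_mono) (simp add: power_add mult.assoc[symmetric], intro mult_right_mono, auto)
    finally show ?thesis by (simp add: mult.assoc)
  qed
  show "cmod (hvy D c x y) \<le> Wt D c R"
    unfolding hvy_def Wt_def by (rule order_trans[OF norm_sum sum_mono]) (rule t3)
qed

lemma hv_diff: "hev D a x y 1 - hev D b x y 1 = hev D (\<lambda>k. a k - b k) x y 1"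
  "hvx D a x y - hvx D b x y = hvx D (\<lambda>k. a k - b k) x y"
  "hvy D a x y - hvy D b x y = hvy D (\<lambda>k. a k - b k) x y"
    unfolding hev1 hvx_def hvy_def sum_subtractf[symmetric]
    by (rule sum.cong, rule refl, simp add: left_diff_distrib)+

lemma Wt_small: assumes "\<And>k. k \<in> Sg D \<Longrightarrow> cmod (c k) \<le> e" "0 \<le> R"
  shows "Wt D c R \<le> e * Wt1 D R"
  unfolding Wt_def Wt1_def sum_distrib_left
  by (intro sum_mono) (use assms in \<open>auto simp: mult.assoc intro!: mult_right_mono\<close>)

lemma near_coef:
  assumes "near D F G e" "k \<in> Sg D"
  shows "cmod (P1 G k - P1 F k) \<le> e" "cmod (P2 G k - P2 F k) \<le> e" "cmod (P3 G k - P3 F k) \<le> e"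
proof -
  obtain i j where k: "k = (i, j)" by fastforce
  have "i + j \<le> D" using Sg_le[OF assms(2)] k by simp
  then have h: "cmod (P1 F (i,j) - P1 G (i,j)) < e \<and> cmod (P2 F (i,j) - P2 G (i,j)) < e
      \<and> cmod (P3 F (i,j) - P3 G (i,j)) < e" using assms(1) unfolding near_def by blast
  show "cmod (P1 G k - P1 F k) \<le> e" "cmod (P2 G k - P2 F k) \<le> e" "cmod (P3 G k - P3 F k) \<le> e"
    using h k by (simp_all add: norm_minus_commute)
qed

lemma qpert:
  fixes u' u U' U S Sx :: complex and \<tau> B :: real
  assumes t: "\<tau> \<le> 1/2" and h1: "cmod (U' - u') \<le> \<tau>" and h2: "cmod (S - 1) \<le> \<tau>" and h3: "cmod Sx \<le> \<tau>"
    and h4: "cmod (U - u) \<le> \<tau>" and b1: "cmod u \<le> B" and b2: "cmod u' \<le> B"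
  shows "cmod (qa U' U S Sx - u') \<le> 12 * \<tau> * (1 + B)"
proof -
  have t0: "0 \<le> \<tau>" using h1 norm_ge_zero order_trans by blast
  have B0: "0 \<le> B" using b1 norm_ge_zero order_trans by blast
  have Sl: "1/2 \<le> cmod S"
  proof -
    have "cmod (1::complex) - cmod S \<le> cmod (1 - S)" by (rule norm_triangle_ineq2)
    then have "1 \<le> cmod S + cmod (S - 1)" by (simp add: norm_minus_commute)
    then show ?thesis using h2 t by linarith
  qed
  have Su: "cmod S \<le> 3/2"
  proof -
    have "cmod S - cmod (1::complex) \<le> cmod (S - 1)" by (rule norm_triangle_ineq2)
    then have "cmod S \<le> cmod (S - 1) + 1" by simp
    then show ?thesis using h2 t by linarith
  qed
  have S0: "S \<noteq> 0" using Sl by auto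
  have Uu: "cmod U \<le> B + \<tau>"
  proof -
    have "cmod U - cmod u \<le> cmod (U - u)" by (rule norm_triangle_ineq2)
    then have "cmod U \<le> cmod (U - u) + cmod u" by simp
    then show ?thesis using h4 b1 by linarith
  qed
  define N where "N = (U' - u') * S + u' * S * (1 - S) - U * Sx"
  have eq: "qa U' U S Sx - u' = N / (S * S)"
    using S0 unfolding qa_def N_def by (simp add: field_simps)
  have "cmod N \<le> cmod ((U' - u') * S) + cmod (u' * S * (1 - S)) + cmod (U * Sx)"
  proof -
    have "cmod N \<le> cmod ((U' - u') * S + u' * S * (1 - S)) + cmod (U * Sx)"
      unfolding N_def by (rule norm_triangle_ineq4)
    also have "cmod ((U' - u') * S + u' * S * (1 - S)) \<le> cmod ((U' - u') * S) + cmod (u' * S * (1 - S))"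
      by (rule norm_triangle_ineq)
    finally show ?thesis by simp
  qed
  also have "\<dots> \<le> \<tau> * (3/2) + B * (3/2) * \<tau> + (B + \<tau>) * \<tau>"
  proof (intro add_mono)
    show "cmod ((U' - u') * S) \<le> \<tau> * (3/2)" unfolding norm_mult using h1 Su t0 by (intro mult_mono) auto
    show "cmod (u' * S * (1 - S)) \<le> B * (3/2) * \<tau>" unfolding norm_mult
      using b2 Su h2 t0 B0 by (intro mult_mono) (auto simp: norm_minus_commute)
    show "cmod (U * Sx) \<le> (B + \<tau>) * \<tau>" unfolding norm_mult using Uu h3 t0 B0 by (intro mult_mono) auto
  qed
  also have "\<dots> \<le> 3 * \<tau> * (1 + B)"
  proof -
    have h1: "\<tau> * \<tau> \<le> \<tau> * (1/2)" using t t0 by (intro mult_left_mono) auto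
    have h2: "0 \<le> B * \<tau>" using t0 B0 by simp
    note h = h1 h2
    have "\<tau> * (3/2) + B * (3/2) * \<tau> + (B + \<tau>) * \<tau> = (3/2) * \<tau> + (5/2) * (B * \<tau>) + \<tau> * \<tau>"
      by (simp add: algebra_simps)
    also have "\<dots> \<le> 3 * \<tau> + 3 * (B * \<tau>)" using h t0 by linarith
    also have "\<dots> = 3 * \<tau> * (1 + B)" by (simp add: algebra_simps)
    finally show ?thesis .
  qed
  finally have Nb: "cmod N \<le> 3 * \<tau> * (1 + B)" .
  have "1/2 * (1/2) \<le> cmod S * cmod S" using Sl by (intro mult_mono) auto
  then have SS: "1/4 \<le> cmod (S * S)" unfolding norm_mult by simp
  have "cmod (N / (S * S)) = cmod N / cmod (S * S)" by (simp add: norm_divide)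
  also have "\<dots> \<le> (3 * \<tau> * (1 + B)) / (1/4)"
    using Nb SS by (intro frac_le) (auto simp: t0 B0)
  finally show ?thesis using eq by simp
qed


lemma P3_facts:
  assumes "\<forall>i j. i + j \<le> D \<longrightarrow> P3 F (i,j) = (if (i,j) = (0,0) then 1 else 0)"
  shows "hev D (P3 F) x y 1 = 1" "hvx D (P3 F) x y = 0" "hvy D (P3 F) x y = 0"
proof -
  have c: "P3 F k = (if k = (0,0) then 1 else 0)" if "k \<in> Sg D" for k
    using assms Sg_le[OF that] by (cases k) auto
  have z: "(0,0) \<in> Sg D" by (simp add: Sg_def)
  have "hev D (P3 F) x y 1 = (\<Sum>k\<in>Sg D. if k = (0,0) then 1 else 0)"
    unfolding hev1 by (rule sum.cong) (auto simp: c)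
  also have "\<dots> = 1" using z finite_Sg by simp
  finally show "hev D (P3 F) x y 1 = 1" .
  show "hvx D (P3 F) x y = 0" unfolding hvx_def by (rule sum.neutral) (auto simp: c)
  show "hvy D (P3 F) x y = 0" unfolding hvy_def by (rule sum.neutral) (auto simp: c)
qed

lemma lam_props:
  assumes "p \<in> lam D G K"
  shows "p \<in> K" "den D G p \<noteq> 0" "aff D G p \<in> lam D G K"
proof -
  obtain x where x: "x 0 = p" "\<forall>n. x n \<in> K \<and> den D G (x n) \<noteq> 0 \<and> x (Suc n) = aff D G (x n)"
    using assms unfolding lam_def by blast
  show "p \<in> K" "den D G p \<noteq> 0" using x by auto
  have "\<forall>n. x (Suc n) \<in> K \<and> den D G (x (Suc n)) \<noteq> 0 \<and> x (Suc (Suc n)) = aff D G (x (Suc n))"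
    using x(2) by blast
  moreover have "x (Suc 0) = aff D G p" using x by simp
  ultimately have "\<exists>y. y 0 = aff D G p \<and> (\<forall>n. y n \<in> K \<and> den D G (y n) \<noteq> 0 \<and> y (Suc n) = aff D G (y n))"
    by (intro exI[of _ "\<lambda>n. x (Suc n)"]) blast
  then show "aff D G p \<in> lam D G K" by (simp add: lam_def)
qed

lemma diff_small:
  assumes "\<And>k. k \<in> Sg D \<Longrightarrow> cmod (a k - b k) \<le> e" "1 \<le> R" "cmod x \<le> R" "cmod y \<le> R" "e * Wt1 D R \<le> \<tau>"
  shows "cmod (hev D a x y 1 - hev D b x y 1) \<le> \<tau>" "cmod (hvx D a x y - hvx D b x y) \<le> \<tau>"
    "cmod (hvy D a x y - hvy D b x y) \<le> \<tau>"
proof -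
  have W: "Wt D (\<lambda>k. a k - b k) R \<le> \<tau>"
    using Wt_small[of D "\<lambda>k. a k - b k" e R] assms by force
  show "cmod (hev D a x y 1 - hev D b x y 1) \<le> \<tau>"
    unfolding hv_diff using hv_bound(1)[OF assms(2-4)] W order_trans by blast
  show "cmod (hvx D a x y - hvx D b x y) \<le> \<tau>"
    unfolding hv_diff using hv_bound(2)[OF assms(2-4)] W order_trans by blast
  show "cmod (hvy D a x y - hvy D b x y) \<le> \<tau>"
    unfolding hv_diff using hv_bound(3)[OF assms(2-4)] W order_trans by blast
qed

lemma hyp_F:
  fixes Zc :: "pt set"
  assumes R: "1 \<le> R" and ZR: "\<And>p. p \<in> Zc \<Longrightarrow> cmod (fst p) \<le> R \<and> cmod (snd p) \<le> R"
    and P3F: "\<forall>i j. i + j \<le> D \<longrightarrow> P3 F (i,j) = (if (i,j) = (0,0) then 1 else 0)"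
    and cF: "\<And>p. p \<in> Zc \<Longrightarrow> hvx D (P2 F) (fst p) (snd p) = 0"
    and a0: "0 < a0" and a1: "a1 < 1" and a1pos: "0 \<le> a1"
    and aF: "\<And>p. p \<in> Zc \<Longrightarrow> a0 \<le> cmod (hvx D (P1 F) (fst p) (snd p)) \<and> cmod (hvx D (P1 F) (fst p) (snd p)) \<le> a1"
    and mF1: "1 < mF" and dF: "\<And>p. p \<in> Zc \<Longrightarrow> mF \<le> cmod (hvy D (P2 F) (fst p) (snd p))"
  shows "\<exists>e>0. \<forall>G. near D F G e \<longrightarrow> hyp_saddle D G (lam D G Zc)"
proof -
  define Bm where "Bm = Wt D (P1 F) R + Wt D (P2 F) R"
  have Bm0: "0 \<le> Bm" unfolding Bm_def Wt_def using R
    by (intro add_nonneg_nonneg sum_nonneg mult_nonneg_nonneg) auto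
  have bnds: "cmod (hev D (P1 F) (fst p) (snd p) 1) \<le> Bm \<and> cmod (hvx D (P1 F) (fst p) (snd p)) \<le> Bm \<and>
     cmod (hvy D (P1 F) (fst p) (snd p)) \<le> Bm \<and> cmod (hev D (P2 F) (fst p) (snd p) 1) \<le> Bm \<and>
     cmod (hvx D (P2 F) (fst p) (snd p)) \<le> Bm \<and> cmod (hvy D (P2 F) (fst p) (snd p)) \<le> Bm" if "p \<in> Zc" for p
  proof -
    have x: "cmod (fst p) \<le> R" and y: "cmod (snd p) \<le> R" using ZR[OF that] by auto
    have w1: "0 \<le> Wt D (P1 F) R" and w2: "0 \<le> Wt D (P2 F) R" unfolding Wt_def using R
      by (intro sum_nonneg mult_nonneg_nonneg; auto)+
    show ?thesis using hv_bound[OF R x y, of D "P1 F"] hv_bound[OF R x y, of D "P2 F"] w1 w2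
      unfolding Bm_def by linarith
  qed
  define g where "g = 1 - a1"
  have g0: "0 < g" using a1 by (simp add: g_def)
  define K where "K = 4 * (Bm + 1) / g + 1"
  have "0 \<le> 4 * (Bm + 1) / g" using Bm0 g0 by simp
  then have K0: "0 < K" by (simp add: K_def)
  define \<tau>1 where "\<tau>1 = min (min (g / 4) (a0 / (4 * (Bm + 1)))) (min ((mF - 1) / (2 * (1 + K))) 1)"
  have t1pos: "0 < \<tau>1" using g0 a0 Bm0 mF1 K0 by (simp add: \<tau>1_def)
  have t1g: "\<tau>1 \<le> g / 4" and t1a: "\<tau>1 \<le> a0 / (4 * (Bm + 1))" and t1m: "\<tau>1 \<le> (mF - 1) / (2 * (1 + K))"
    and t11: "\<tau>1 \<le> 1" unfolding \<tau>1_def by (simp_all only: min_le_iff_disj order_refl simp_thms)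
  define \<tau> where "\<tau> = min (1/2) (\<tau>1 / (12 * (1 + Bm)))"
  have tpos: "0 < \<tau>" using t1pos Bm0 by (simp add: \<tau>_def)
  have th: "\<tau> \<le> 1/2" unfolding \<tau>_def by (rule min.cobounded1)
  have tt1: "12 * \<tau> * (1 + Bm) \<le> \<tau>1"
  proof -
    have "\<tau> \<le> \<tau>1 / (12 * (1 + Bm))" unfolding \<tau>_def by (rule min.cobounded2)
    then show ?thesis using Bm0 by (simp add: field_simps)
  qed
  have W10: "0 \<le> Wt1 D R" unfolding Wt1_def using R by (intro sum_nonneg mult_nonneg_nonneg) auto
  define e where "e = \<tau> / (Wt1 D R + 1)"
  have e0: "0 < e" using tpos W10 by (simp add: e_def)
  have eW: "e * Wt1 D R \<le> \<tau>"
  proof -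
    have "e * Wt1 D R \<le> e * (Wt1 D R + 1)" using e0 by simp
    also have "\<dots> = \<tau>" using W10 by (simp add: e_def)
    finally show ?thesis .
  qed
  show ?thesis
  proof (intro exI[of _ e] conjI allI impI e0)
    fix G assume near: "near D F G e"
    define T where "T = lam D G Zc"
    define aG where "aG p = qa (hvx D (P1 G) (fst p) (snd p)) (hev D (P1 G) (fst p) (snd p) 1) (den D G p) (hvx D (P3 G) (fst p) (snd p))" for p
    define bG where "bG p = qa (hvy D (P1 G) (fst p) (snd p)) (hev D (P1 G) (fst p) (snd p) 1) (den D G p) (hvy D (P3 G) (fst p) (snd p))" for p
    define cG where "cG p = qa (hvx D (P2 G) (fst p) (snd p)) (hev D (P2 G) (fst p) (snd p) 1) (den D G p) (hvx D (P3 G) (fst p) (snd p))" for p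
    define dG where "dG p = qa (hvy D (P2 G) (fst p) (snd p)) (hev D (P2 G) (fst p) (snd p) 1) (den D G p) (hvy D (P3 G) (fst p) (snd p))" for p
    have close: "cmod (aG p - hvx D (P1 F) (fst p) (snd p)) \<le> \<tau>1 \<and> cmod (bG p - hvy D (P1 F) (fst p) (snd p)) \<le> \<tau>1 \<and>
       cmod (cG p) \<le> \<tau>1 \<and> cmod (dG p - hvy D (P2 F) (fst p) (snd p)) \<le> \<tau>1 \<and> den D G p \<noteq> 0" if "p \<in> Zc" for p
    proof -
      have x: "cmod (fst p) \<le> R" and y: "cmod (snd p) \<le> R" using ZR[OF that] by auto
      note d1 = diff_small[of D "P1 G" "P1 F" e, OF near_coef(1)[OF near] R x y eW]
      note d2 = diff_small[of D "P2 G" "P2 F" e, OF near_coef(2)[OF near] R x y eW]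
      note d3 = diff_small[of D "P3 G" "P3 F" e, OF near_coef(3)[OF near] R x y eW]
      note p3 = P3_facts[OF P3F, of "fst p" "snd p"]
      have S1: "cmod (den D G p - 1) \<le> \<tau>" using d3(1) p3(1) by (simp add: den_def)
      have Sx: "cmod (hvx D (P3 G) (fst p) (snd p)) \<le> \<tau>" using d3(2) p3(2) by simp
      have Sy: "cmod (hvy D (P3 G) (fst p) (snd p)) \<le> \<tau>" using d3(3) p3(3) by simp
      note b = bnds[OF that]
      have qa1: "cmod (aG p - hvx D (P1 F) (fst p) (snd p)) \<le> 12 * \<tau> * (1 + Bm)"
        unfolding aG_def by (rule qpert[OF th d1(2) S1 Sx d1(1)]) (use b in auto)
      have qb1: "cmod (bG p - hvy D (P1 F) (fst p) (snd p)) \<le> 12 * \<tau> * (1 + Bm)"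
        unfolding bG_def by (rule qpert[OF th d1(3) S1 Sy d1(1)]) (use b in auto)
      have qc1: "cmod (cG p - hvx D (P2 F) (fst p) (snd p)) \<le> 12 * \<tau> * (1 + Bm)"
        unfolding cG_def by (rule qpert[OF th d2(2) S1 Sx d2(1)]) (use b in auto)
      have qd1: "cmod (dG p - hvy D (P2 F) (fst p) (snd p)) \<le> 12 * \<tau> * (1 + Bm)"
        unfolding dG_def by (rule qpert[OF th d2(3) S1 Sy d2(1)]) (use b in auto)
      have "den D G p \<noteq> 0" using S1 th by (auto simp: norm_minus_commute)
      then show ?thesis using qa1 qb1 qc1 qd1 tt1 cF[OF that] by auto
    qed
    define s where "s = a1 + \<tau>1"
    define M where "M = Bm + \<tau>1"
    define m where "m = mF - \<tau>1"
    have "cone_ctx D G T aG bG cG dG s M \<tau>1 K m"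
    proof
      fix p assume pT: "p \<in> T"
      have pZ: "p \<in> Zc" and dn: "den D G p \<noteq> 0" and aT: "aff D G p \<in> lam D G Zc"
        using lam_props[OF pT[unfolded T_def]] by auto
      note cl = close[OF pZ]
      note b = bnds[OF pZ]
      show "aff D G p \<in> T" using aT by (simp add: T_def)
      show "den D G p \<noteq> 0" by (rule dn)
      show "Df D G p = (\<lambda>v. (aG p * fst v + bG p * snd v, cG p * fst v + dG p * snd v))"
        unfolding Df_formula[OF dn] aG_def bG_def cG_def dG_def ..
      have aa: "cmod (aG p) \<le> cmod (hvx D (P1 F) (fst p) (snd p)) + \<tau>1"
        using cl norm_triangle_ineq2[of "aG p" "hvx D (P1 F) (fst p) (snd p)"] by linarith
      show "cmod (aG p) \<le> s" using aa aF[OF pZ] by (simp add: s_def)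
      have "cmod (bG p) \<le> cmod (hvy D (P1 F) (fst p) (snd p)) + \<tau>1"
        using cl norm_triangle_ineq2[of "bG p" "hvy D (P1 F) (fst p) (snd p)"] by linarith
      then show "cmod (bG p) \<le> M" using b by (simp add: M_def)
      show "cmod (cG p) \<le> \<tau>1" using cl by simp
      have dd: "cmod (hvy D (P2 F) (fst p) (snd p)) - \<tau>1 \<le> cmod (dG p)"
        using cl norm_triangle_ineq2[of "hvy D (P2 F) (fst p) (snd p)" "dG p"] by (simp add: norm_minus_commute)
      show "m \<le> cmod (dG p)" using dd dF[OF pZ] by (simp add: m_def)
      have al: "a0 - \<tau>1 \<le> cmod (aG p)"
        using cl norm_triangle_ineq2[of "hvx D (P1 F) (fst p) (snd p)" "aG p"] aF[OF pZ] by (simp add: norm_minus_commute)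
      show "aG p * dG p - bG p * cG p \<noteq> 0"
      proof
        assume "aG p * dG p - bG p * cG p = 0"
        then have "cmod (aG p * dG p) = cmod (bG p * cG p)" by simp
        then have eq: "cmod (aG p) * cmod (dG p) = cmod (bG p) * cmod (cG p)" by (simp add: norm_mult)
        have m1: "1 \<le> m"
        proof -
          have "(mF - 1) / (2 * (1 + K)) \<le> (mF - 1) / 2" using mF1 K0 by (intro divide_left_mono) auto
          then have "\<tau>1 \<le> (mF - 1) / 2" using t1m by linarith
          then show ?thesis using t1pos by (simp add: m_def)
        qed
        have f1': "(a0 - \<tau>1) * 1 \<le> cmod (aG p) * cmod (dG p)"
          using al m1 `m \<le> cmod (dG p)` t1a a0 Bm0
          by (intro mult_mono) (auto simp: field_simps)
        have g0: "cmod (bG p) * cmod (cG p) \<le> M * \<tau>1"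
          using `cmod (bG p) \<le> M` cl Bm0 t1pos by (intro mult_mono) (auto simp: M_def)
        have g1: "M * \<tau>1 \<le> (Bm + 1) * (a0 / (4 * (Bm + 1)))"
          using t11 t1a t1pos Bm0 by (intro mult_mono) (auto simp: M_def)
        have g2: "(Bm + 1) * (a0 / (4 * (Bm + 1))) = a0 / 4"
        proof -
          have "Bm + 1 \<noteq> 0" using Bm0 by simp
          then show ?thesis by (simp add: field_simps)
        qed
        have f3: "\<tau>1 \<le> a0 / 4"
        proof -
          have "a0 / (4 * (Bm + 1)) \<le> a0 / 4" using a0 Bm0 by (intro divide_left_mono) auto
          then show ?thesis using t1a by linarith
        qed
        have f1: "a0 - \<tau>1 \<le> cmod (aG p) * cmod (dG p)" using f1' by simp
        have f2: "cmod (bG p) * cmod (cG p) \<le> a0 / 4" using g0 g1 g2 by linarith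
        show False using f1 f2 f3 eq a0 by linarith
      qed
    next
      show "0 \<le> s" using a1pos t1pos by (simp add: s_def)
    next
      show "0 \<le> M" using Bm0 t1pos by (simp add: M_def)
    next
      show "0 \<le> \<tau>1" using t1pos by simp
    next
      show "0 < K" by (rule K0)
    next
      have MK: "M / K \<le> g / 4"
      proof -
        have "M \<le> Bm + 1" using t11 by (simp add: M_def)
        moreover have "(Bm + 1) \<le> g / 4 * K" using g0 Bm0 by (simp add: K_def field_simps)
        ultimately show ?thesis using K0 by (simp add: field_simps)
      qed
      have "s + M / K \<le> a1 + g / 4 + g / 4" using MK t1g unfolding s_def by linarith
      also have "\<dots> < 1" using a1 unfolding g_def by (simp add: field_simps)
      finally show "s + M / K < 1" .
    next
      have "\<tau>1 * (1 + K) \<le> (mF - 1) / 2" using t1m K0 by (simp add: field_simps)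
      then show "1 < m - \<tau>1 * K" using mF1 by (simp add: m_def algebra_simps)
    qed
    then show "hyp_saddle D G (lam D G Zc)" using cone_ctx.hyp unfolding T_def by blast
  qed
qed


lemma alpha_lt1:
  fixes c :: "nat \<Rightarrow> complex" and e \<alpha> :: real
  assumes IFS: "\<forall>\<rho>::complex. 1 - \<alpha> \<le> cmod \<rho> \<and> cmod \<rho> \<le> 1 + \<alpha> \<longrightarrow>
                cball 0 1 \<subseteq> (\<Union>j\<in>{1,2,3}. (\<lambda>z. \<rho> * z + e * c j) ` ball 0 1) \<and> Q \<rho>"
    and a0: "0 < \<alpha>"
  shows "\<alpha> < 1"
proof (rule ccontr)
  assume "\<not> \<alpha> < 1"
  then have "cball 0 1 \<subseteq> (\<Union>j\<in>{1,2,3}. (\<lambda>z. 0 * z + e * c j) ` ball 0 1)"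
    using IFS[rule_format, of 0] a0 by simp
  then have sub: "cball (0::complex) 1 \<subseteq> {e * c 1, e * c 2, e * c 3}" by auto
  obtain r where r: "r > 0" "\<forall>w\<in>ball 0 r. w \<in> ball (0::complex) 1 \<and> (w \<noteq> 0 \<longrightarrow> w \<notin> {e * c 1, e * c 2, e * c 3})"
    using finite_ball_avoid[of "ball (0::complex) 1" "{e * c 1, e * c 2, e * c 3}" 0] by auto
  define w where "w = complex_of_real (min (r/2) (1/2))"
  have w1: "w \<in> ball 0 r" using r by (simp add: w_def)
  have w0: "w \<noteq> 0" using r by (simp add: w_def)
  have "w \<in> cball 0 1" using r by (simp add: w_def)
  then show False using sub r(2) w1 w0 by blast
qed

lemma margin:
  fixes c :: "nat \<Rightarrow> complex" and e \<alpha> :: real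
  assumes a: "0 < \<alpha>" "\<alpha> < 1"
    and cov: "\<And>\<rho>::complex. cmod \<rho> = 1 - \<alpha> \<Longrightarrow> cball 0 1 \<subseteq> (\<Union>j\<in>{1,2,3}. (\<lambda>z. \<rho> * z + e * c j) ` ball 0 1)"
  shows "\<exists>\<mu>>0. \<mu> \<le> 1/2 \<and> (\<forall>\<rho> z'. cmod \<rho> = 1 - \<alpha> \<and> cmod z' \<le> 1 \<longrightarrow>
           (\<exists>j\<in>{1,2,3}. cmod ((z' - e * c j) / \<rho>) + \<mu> < 1))"
proof -
  define Ks where "Ks = sphere (0::complex) (1 - \<alpha>) \<times> cball (0::complex) 1"
  define f where "f j p = cmod ((snd p - e * c j) / fst p)" for j and p :: "complex \<times> complex"
  define \<Phi> where "\<Phi> p = min (min (f 1 p) (f 2 p)) (f 3 p)" for p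
  have cK: "compact Ks" unfolding Ks_def by (intro compact_Times compact_sphere compact_cball)
  have neK: "Ks \<noteq> {}" unfolding Ks_def using a by (auto intro!: exI[of _ "complex_of_real (1 - \<alpha>)"])
  have nz: "\<forall>p\<in>Ks. fst p \<noteq> 0" using a by (auto simp: Ks_def)
  have cf: "continuous_on Ks (f j)" for j
    unfolding f_def using nz by (intro continuous_intros) auto
  have cPhi: "continuous_on Ks \<Phi>" unfolding \<Phi>_def by (intro continuous_on_min cf)
  obtain x where x: "x \<in> Ks" "\<forall>y\<in>Ks. \<Phi> y \<le> \<Phi> x"
    using continuous_attains_sup[OF cK neK cPhi] by blast
  have lt: "\<Phi> p < 1" if "p \<in> Ks" for p
  proof -
    have "cmod (fst p) = 1 - \<alpha>" "snd p \<in> cball 0 1" using that by (auto simp: Ks_def)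
    then obtain j \<zeta> where j: "j \<in> {1,2,3}" "\<zeta> \<in> ball 0 1" "snd p = fst p * \<zeta> + e * c j"
      using cov by blast
    have "f j p = cmod \<zeta>" using j nz that by (simp add: f_def)
    then have "f j p < 1" using j by simp
    then show ?thesis using j(1) unfolding \<Phi>_def by (auto simp: min_less_iff_disj)
  qed
  have P0: "0 \<le> \<Phi> p" for p unfolding \<Phi>_def f_def by simp
  define \<mu> where "\<mu> = (1 - \<Phi> x) / 2"
  have mu0: "\<mu> > 0" using lt[OF x(1)] by (simp add: \<mu>_def)
  have mu1: "\<mu> \<le> 1/2" using P0[of x] by (simp add: \<mu>_def)
  show ?thesis
  proof (intro exI[of _ \<mu>] conjI mu0 mu1 allI impI)
    fix \<rho> z' :: complex assume h: "cmod \<rho> = 1 - \<alpha> \<and> cmod z' \<le> 1"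
    then have pK: "(\<rho>, z') \<in> Ks" by (simp add: Ks_def)
    have le: "\<Phi> (\<rho>, z') \<le> \<Phi> x" using x(2) pK by blast
    have "\<Phi> (\<rho>, z') + \<mu> \<le> \<Phi> x + \<mu>" using le by simp
    also have "\<dots> < 1" using lt[OF x(1)] by (simp add: \<mu>_def field_simps)
    finally have "\<Phi> (\<rho>, z') + \<mu> < 1" .
    then have "f 1 (\<rho>, z') + \<mu> < 1 \<or> f 2 (\<rho>, z') + \<mu> < 1 \<or> f 3 (\<rho>, z') + \<mu> < 1"
      unfolding \<Phi>_def by linarith
    then show "\<exists>j\<in>{1,2,3}. cmod ((z' - e * c j) / \<rho>) + \<mu> < 1" by (auto simp: f_def)
  qed
qed

lemma cauchy_aF:
  assumes h: "\<forall>z\<in>ball 0 2. cmod (hev D a z w 1 - (\<rho> * z + c0)) \<le> \<delta>" and z: "cmod z \<le> 1"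
  shows "cmod (hvx D a z w - \<rho>) \<le> 2 * \<delta>"
proof -
  define g where "g \<zeta> = hev D a \<zeta> w 1 - (\<rho> * \<zeta> + c0)" for \<zeta>
  have dg: "(g has_field_derivative (hvx D a \<zeta> w - \<rho>)) (at \<zeta>)" for \<zeta>
    unfolding g_def by (auto intro!: derivative_eq_intros hv_deriv_x)
  have hol: "g holomorphic_on S" for S
    unfolding holomorphic_on_def field_differentiable_def using dg has_field_derivative_at_within by blast
  have cont: "continuous_on S g" for S using hol holomorphic_on_imp_continuous_on by blast
  have "norm ((deriv ^^ 1) g z) \<le> (fact 1) * \<delta> / (1/2)^1"
  proof (rule Cauchy_inequality[OF hol cont])
    show "(0::real) < 1/2" by simp
    fix x assume "norm (z - x) = 1/2"
    then have "cmod x \<le> 3/2" using z norm_triangle_ineq2[of x z] by (simp add: norm_minus_commute)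
    then have "x \<in> ball 0 2" by simp
    then show "norm (g x) \<le> \<delta>" using h by (simp add: g_def)
  qed
  moreover have "deriv g z = hvx D a z w - \<rho>" by (rule DERIV_imp_deriv[OF dg])
  ultimately show ?thesis by simp
qed

lemma solve_h:
  fixes H :: "complex \<Rightarrow> complex"
  assumes \<rho>: "\<rho> \<noteq> 0" and r: "0 < r" and z0: "cmod ((z' - c0) / \<rho>) + r < 1" and \<delta>: "\<delta> \<le> r * cmod \<rho>"
    and Hc: "continuous_on UNIV H" and h: "\<forall>z\<in>ball 0 2. cmod (H z - (\<rho> * z + c0)) \<le> \<delta>"
  shows "\<exists>z\<in>ball 0 1. H z = z'"
proof -
  define z0 where "z0 = (z' - c0) / \<rho>"
  define f where "f z = z + (z' - H z) / \<rho>" for z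
  have sub: "cball z0 r \<subseteq> ball 0 1"
  proof
    fix z assume "z \<in> cball z0 r"
    then have "cmod (z - z0) \<le> r" by (simp add: dist_norm norm_minus_commute)
    then have "cmod z \<le> cmod z0 + r" using norm_triangle_ineq2[of z z0] by simp
    then show "z \<in> ball 0 1" using z0 by (simp add: z0_def)
  qed
  have fc: "continuous_on (cball z0 r) f"
    unfolding f_def using \<rho> by (intro continuous_intros continuous_on_subset[OF Hc]) auto
  have fm: "f \<in> cball z0 r \<rightarrow> cball z0 r"
  proof
    fix z assume zc: "z \<in> cball z0 r"
    then have "z \<in> ball 0 2" using sub by auto
    then have E: "cmod (H z - (\<rho> * z + c0)) \<le> \<delta>" using h by blast
    have "f z - z0 = - (H z - (\<rho> * z + c0)) / \<rho>"
      using \<rho> unfolding f_def z0_def by (simp add: field_simps)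
    then have "cmod (f z - z0) = cmod (H z - (\<rho> * z + c0)) / cmod \<rho>" by (simp add: norm_divide norm_minus_commute)
    also have "\<dots> \<le> \<delta> / cmod \<rho>" using E \<rho> by (simp add: divide_right_mono)
    also have "\<dots> \<le> r" using \<delta> \<rho> by (simp add: field_simps)
    finally show "f z \<in> cball z0 r" by (simp add: dist_norm norm_minus_commute)
  qed
  obtain z where z: "z \<in> cball z0 r" "f z = z" using brouwer_ball[OF r fc fm] by blast
  then have "H z = z'" using \<rho> by (simp add: f_def)
  then show ?thesis using z sub by blast
qed


lemma cl_le:
  fixes g :: "complex \<Rightarrow> complex"
  assumes "\<forall>w\<in>S. cmod (g w) \<le> c" "continuous_on UNIV g" "w \<in> closure S"
  shows "cmod (g w) \<le> c"
proof -
  have "closed {w. cmod (g w) \<le> c}"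
    by (intro closed_Collect_le continuous_intros assms(2))
  moreover have "S \<subseteq> {w. cmod (g w) \<le> c}" using assms(1) by auto
  ultimately have "closure S \<subseteq> {w. cmod (g w) \<le> c}" by (rule closure_minimal[rotated])
  then show ?thesis using assms(3) by auto
qed

lemma cl_ge:
  fixes g :: "complex \<Rightarrow> complex"
  assumes "\<forall>w\<in>S. c \<le> cmod (g w)" "continuous_on UNIV g" "w \<in> closure S"
  shows "c \<le> cmod (g w)"
proof -
  have "closed {w. c \<le> cmod (g w)}"
    by (intro closed_Collect_le continuous_intros assms(2))
  moreover have "S \<subseteq> {w. c \<le> cmod (g w)}" using assms(1) by auto
  ultimately have "closure S \<subseteq> {w. c \<le> cmod (g w)}" by (rule closure_minimal[rotated])
  then show ?thesis using assms(3) by auto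
qed

lemma hev_cont_w: "continuous_on UNIV (\<lambda>w. hev D a z w 1 - k)"
  unfolding hev1 by (intro continuous_intros)

lemma hvy_cont_w: "continuous_on UNIV (\<lambda>w. hvy D a z w)"
  unfolding hvy_def by (intro continuous_intros)

theorem proposition3p7:
  fixes q :: "complex poly" and m1 :: nat
    and r chi c :: "nat \<Rightarrow> complex" and V :: "nat \<Rightarrow> nat \<Rightarrow> complex set"
    and eps0 alpha0 :: real
  assumes deg: "degree q \<ge> 2"
    and m1: "m1 \<ge> 1"
    and r_distinct: "r 1 \<noteq> r 2" "r 1 \<noteq> r 3" "r 2 \<noteq> r 3"
    and r_per: "\<forall>i\<in>{1,2,3}. (poly q ^^ m1) (r i) = r i \<and>
                   (\<forall>k. 0 < k \<and> k < m1 \<longrightarrow> (poly q ^^ k) (r i) \<noteq> r i)"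
    and chi: "\<forall>i\<in>{1,2,3}. chi i = deriv (poly q ^^ m1) (r i)"
    and repelling: "\<forall>i\<in>{1,2,3}. cmod (chi i) > 1"
    and not_pc: "\<forall>i\<in>{1,2,3}. r i \<notin> postcritical q"
    and V_basic: "\<forall>i\<in>{1,2,3}. \<forall>l. open (V i l) \<and> connected (V i l) \<and> bounded (V i l)
                    \<and> r i \<in> V i l \<and> bij_betw (poly q ^^ m1) (V i (Suc l)) (V i l)"
    and V_diam: "\<exists>K \<theta>. 0 < \<theta> \<and> \<theta> < 1 \<and> (\<forall>i\<in>{1,2,3}. \<forall>l. diameter (V i l) \<le> K * \<theta> ^ l)"
    and V_large: "\<exists>A>0. \<exists>L. \<forall>l\<ge>L. \<forall>i\<in>{1,2,3}.
                    A * cmod (chi i) ^ l > 1 \<and>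
                    (\<forall>z\<in>V i l. cmod (deriv (poly q ^^ (l * m1)) z) \<ge> A * cmod (chi i) ^ l) \<and>
                    closure (\<Union>j\<in>{1,2,3}. V j l) \<subseteq> (poly q ^^ (l * m1)) ` V i l \<and>
                    (\<forall>j\<in>{1,2,3}. bij_betw (poly q ^^ (l * m1))
                        (V i l \<inter> (poly q ^^ (l * m1)) -` V j l) (V j l))"
    and c_nonaligned: "\<not> collinear {c 1, c 2, c 3}"
    and c_sum: "c 1 + c 2 + c 3 = 0"
    and eps0: "eps0 > 0" and alpha0: "alpha0 > 0"
    and IFS: "\<forall>\<rho>::complex. 1 - alpha0 \<le> cmod \<rho> \<and> cmod \<rho> \<le> 1 + alpha0 \<longrightarrow>
                cball 0 1 \<subseteq> (\<Union>j\<in>{1,2,3}. (\<lambda>z. \<rho> * z + eps0 * c j) ` ball 0 1) \<and>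
                (\<exists>H :: nat \<Rightarrow> complex set. (\<forall>j\<in>{1,2,3}. open (H j)) \<and>
                   ball 0 1 = (\<Union>j\<in>{1,2,3}. H j) \<and>
                   (\<forall>j\<in>{1,2,3}. closure ((\<lambda>z. \<rho> * z + eps0 * c j) ` H j) \<subseteq> ball 0 1) \<and>
                   (\<forall>j\<in>{1,2,3}. closure ((\<lambda>z. \<rho> * z + eps0 * c j) ` ((\<lambda>z. z / 3) ` H j))
                                   \<subseteq> ball 0 (1/3)))"
  shows "\<exists>l0 \<ge> 1. \<exists>\<delta>0 > 0. \<forall>l \<ge> l0. \<forall>\<rho>::complex. \<forall>D F.
           cmod \<rho> = 1 - alpha0 \<and> inH D F \<and>
           (\<forall>i j. i + j \<le> D \<longrightarrow> P3 F (i,j) = (if (i,j) = (0,0) then 1 else 0)) \<and>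
           (\<forall>z w. hev D (P2 F) z w 1 = (poly q ^^ (m1 * l)) w) \<and>
           (\<forall>j\<in>{1,2,3}. \<forall>z\<in>ball 0 2. \<forall>w\<in>V j l.
               cmod (hev D (P1 F) z w 1 - (\<rho> * z + eps0 * c j)) \<le> \<delta>0)
           \<longrightarrow> blender_saddle D F (\<Union>i\<in>{1,2,3}. ball 0 1 \<times> V i l)"

proof -
  have a1: "alpha0 < 1" by (rule alpha_lt1[OF IFS alpha0])
  have cov: "cball 0 1 \<subseteq> (\<Union>j\<in>{1,2,3}. (\<lambda>z. \<rho> * z + eps0 * c j) ` ball 0 1)"
    if "cmod \<rho> = 1 - alpha0" for \<rho> :: complex
    using IFS[rule_format, of \<rho>] that alpha0 by auto
  obtain \<mu> where mu: "\<mu> > 0" "\<mu> \<le> 1/2"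
    "\<forall>\<rho> z'. cmod \<rho> = 1 - alpha0 \<and> cmod z' \<le> 1 \<longrightarrow> (\<exists>j\<in>{1,2,3}. cmod ((z' - eps0 * c j) / \<rho>) + \<mu> < 1)"
    using margin[OF alpha0 a1 cov] by blast
  obtain A L where A: "A > 0" and AL: "\<forall>l\<ge>L. \<forall>i\<in>{1,2,3}.
                    A * cmod (chi i) ^ l > 1 \<and>
                    (\<forall>z\<in>V i l. cmod (deriv (poly q ^^ (l * m1)) z) \<ge> A * cmod (chi i) ^ l) \<and>
                    closure (\<Union>j\<in>{1,2,3}. V j l) \<subseteq> (poly q ^^ (l * m1)) ` V i l \<and>
                    (\<forall>j\<in>{1,2,3}. bij_betw (poly q ^^ (l * m1))
                        (V i l \<inter> (poly q ^^ (l * m1)) -` V j l) (V j l))"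
    using V_large by blast
  define \<delta>0 where "\<delta>0 = min (alpha0 / 8) (\<mu> * (1 - alpha0) / 2)"
  have d0: "0 < \<delta>0" using alpha0 a1 mu by (simp add: \<delta>0_def)
  have d1: "\<delta>0 \<le> alpha0 / 8" by (simp add: \<delta>0_def)
  have d2: "\<delta>0 \<le> \<mu> * (1 - alpha0) / 2" by (simp add: \<delta>0_def)
  show ?thesis
  proof (intro exI[of _ "max 1 L"] conjI exI[of _ \<delta>0] d0 allI impI)
    show "1 \<le> max 1 L" by simp
    fix l \<rho> D F
    assume l: "max 1 L \<le> l"
    assume H: "cmod \<rho> = 1 - alpha0 \<and> inH D F \<and>
           (\<forall>i j. i + j \<le> D \<longrightarrow> P3 F (i,j) = (if (i,j) = (0,0) then 1 else 0)) \<and>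
           (\<forall>z w. hev D (P2 F) z w 1 = (poly q ^^ (m1 * l)) w) \<and>
           (\<forall>j\<in>{1,2,3}. \<forall>z\<in>ball 0 2. \<forall>w\<in>V j l.
               cmod (hev D (P1 F) z w 1 - (\<rho> * z + eps0 * c j)) \<le> \<delta>0)"
    then have rho: "cmod \<rho> = 1 - alpha0" and inHF: "inH D F"
      and P3F: "\<forall>i j. i + j \<le> D \<longrightarrow> P3 F (i,j) = (if (i,j) = (0,0) then 1 else 0)"
      and P2F: "\<And>z w. hev D (P2 F) z w 1 = (poly q ^^ (l * m1)) w"
      and P1F: "\<And>j z w. j \<in> {1,2,3} \<Longrightarrow> z \<in> ball 0 2 \<Longrightarrow> w \<in> V j l \<Longrightarrow>
               cmod (hev D (P1 F) z w 1 - (\<rho> * z + eps0 * c j)) \<le> \<delta>0"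
      by (auto simp: mult.commute)
    have lL: "l \<ge> L" using l by simp
    have rho0: "\<rho> \<noteq> 0" using rho a1 by auto
    note ALl = AL[rule_format, OF lL]
    define Z where "Z = (\<Union>i\<in>{1,2,3}. ball (0::complex) 1 \<times> V i l)"
    have clZ: "closure Z = (\<Union>i\<in>{1,2,3}. cball (0::complex) 1 \<times> closure (V i l))"
      by (simp add: Z_def closure_Times)
    have den1: "den D F p = 1" for p using P3_facts(1)[OF P3F] by (simp add: den_def)
    have affF: "aff D F p = (hev D (P1 F) (fst p) (snd p) 1, (poly q ^^ (l * m1)) (snd p))" for p
      by (simp add: aff_def den1 P2F)
    show "blender_saddle D F (\<Union>i\<in>{1,2,3}. ball 0 1 \<times> V i l)"
      unfolding Z_def[symmetric] blender_saddle_def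
    proof (intro conjI inHF)
      have o: "open (V 1 l)" "open (V 2 l)" "open (V 3 l)" using V_basic by auto
      show "open Z" unfolding Z_def using o by (simp add: open_Un open_Times)
      show "closure Z \<subseteq> aff D F ` {p \<in> Z. den D F p \<noteq> 0}"
      proof
        fix p assume pZ: "p \<in> closure Z"
        obtain z' w' where p: "p = (z', w')" by fastforce
        obtain j where j: "j \<in> {1,2,3}" "cmod z' \<le> 1" "w' \<in> closure (V j l)"
          using pZ p clZ by auto
        obtain i where i: "i \<in> {1,2,3}" "cmod ((z' - eps0 * c i) / \<rho>) + \<mu> < 1"
          using mu(3) rho j(2) by blast
        have "w' \<in> closure (\<Union>j\<in>{1,2,3}. V j l)"
          using j closure_mono[of "V j l" "\<Union>j\<in>{1,2,3}. V j l"] by auto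
        then obtain w where w: "w \<in> V i l" "(poly q ^^ (l * m1)) w = w'"
          using ALl[OF i(1)] by blast
        have "\<exists>z\<in>ball 0 1. hev D (P1 F) z w 1 = z'"
        proof (rule solve_h[OF rho0, of "\<mu>/2" z' "eps0 * c i" \<delta>0])
          show "0 < \<mu> / 2" using mu by simp
          show "cmod ((z' - eps0 * c i) / \<rho>) + \<mu> / 2 < 1" using i mu by simp
          show "\<delta>0 \<le> \<mu> / 2 * cmod \<rho>" using d2 rho by simp
          show "continuous_on UNIV (\<lambda>z. hev D (P1 F) z w 1)" unfolding hev1 by (intro continuous_intros)
          show "\<forall>z\<in>ball 0 2. cmod (hev D (P1 F) z w 1 - (\<rho> * z + eps0 * c i)) \<le> \<delta>0"
            using P1F i w by blast
        qed
        then obtain z where z: "z \<in> ball 0 1" "hev D (P1 F) z w 1 = z'" by blast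
        have "(z, w) \<in> Z" using z w i by (auto simp: Z_def)
        moreover have "aff D F (z, w) = p" using z w by (simp add: affF p)
        ultimately show "p \<in> aff D F ` {p \<in> Z. den D F p \<noteq> 0}" using den1 by force
      qed
      show "\<exists>e>0. \<forall>G. inH D G \<and> near D F G e \<longrightarrow> hyp_saddle D G (lam D G (closure Z))"
      proof -
        have "bounded (V 1 l)" "bounded (V 2 l)" "bounded (V 3 l)" using V_basic by auto
        then have bV: "bounded (closure (V 1 l \<union> V 2 l \<union> V 3 l))"
          by (intro bounded_closure bounded_Un) auto
        then obtain Rv where Rv: "\<forall>x\<in>closure (V 1 l \<union> V 2 l \<union> V 3 l). norm x \<le> Rv"
          unfolding bounded_iff by blast
        define R where "R = max 1 Rv"
        have R1: "1 \<le> R" by (simp add: R_def)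
        have memZ: "\<exists>j\<in>{1,2,3}. cmod (fst p) \<le> 1 \<and> snd p \<in> closure (V j l)" if "p \<in> closure Z" for p
          using that clZ by (cases p) auto
        have ZR: "cmod (fst p) \<le> R \<and> cmod (snd p) \<le> R" if pZ: "p \<in> closure Z" for p
        proof -
          obtain j where j: "j \<in> {1,2,3}" "cmod (fst p) \<le> 1" "snd p \<in> closure (V j l)" using memZ[OF pZ] by blast
          have sp: "snd p \<in> closure (V 1 l \<union> V 2 l \<union> V 3 l)"
            using j(3) closure_mono[of "V j l" "V 1 l \<union> V 2 l \<union> V 3 l"] j(1) by auto
          have sR: "cmod (snd p) \<le> Rv" using Rv sp by blast
          show ?thesis using j(2) sR unfolding R_def by (simp add: le_max_iff_disj)
        qed
        have cF: "hvx D (P2 F) x y = 0" for x y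
        proof -
          have "((\<lambda>x. hev D (P2 F) x y 1) has_field_derivative 0) (at x)"
            unfolding P2F by simp
          then show ?thesis using hv_deriv_x DERIV_unique by blast
        qed
        have dFeq: "hvy D (P2 F) x y = deriv (poly q ^^ (l * m1)) y" for x y
        proof -
          have "((poly q ^^ (l * m1)) has_field_derivative hvy D (P2 F) x y) (at y)"
            using hv_deriv_y[of D "P2 F" x y] unfolding P2F by simp
          then show ?thesis by (rule DERIV_imp_deriv[symmetric])
        qed
        define mF where "mF = min (A * cmod (chi 1) ^ l) (min (A * cmod (chi 2) ^ l) (A * cmod (chi 3) ^ l))"
        have mF1: "1 < mF" using ALl by (simp add: mF_def)
        have mFle: "mF \<le> A * cmod (chi j) ^ l" if "j \<in> {1,2,3}" for j
          using that by (auto simp: mF_def)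
        have pos: "0 < 1 - alpha0 - 2 * \<delta>0"
          proof -
            define b where "b = 1 - alpha0"
            have b0: "0 < b" using a1 by (simp add: b_def)
            have "\<mu> * b \<le> 1/2 * b" using mu(2) b0 by (intro mult_right_mono) auto
            moreover have "2 * \<delta>0 \<le> \<mu> * b" using d2 by (simp add: b_def)
            ultimately have "0 < b - 2 * \<delta>0" using b0 by linarith
            then show ?thesis by (simp add: b_def)
          qed
        have lt1: "1 - alpha0 + 2 * \<delta>0 < 1" using d1 alpha0 by simp
        have ge0: "0 \<le> 1 - alpha0 + 2 * \<delta>0" using d0 a1 by simp
        have aFb: "1 - alpha0 - 2 * \<delta>0 \<le> cmod (hvx D (P1 F) (fst p) (snd p)) \<and>
                cmod (hvx D (P1 F) (fst p) (snd p)) \<le> 1 - alpha0 + 2 * \<delta>0" if pZ: "p \<in> closure Z" for p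
        proof -
          obtain j where j: "j \<in> {1,2,3}" "cmod (fst p) \<le> 1" "snd p \<in> closure (V j l)" using memZ[OF pZ] by blast
          have hcl: "\<forall>z\<in>ball 0 2. cmod (hev D (P1 F) z (snd p) 1 - (\<rho> * z + eps0 * c j)) \<le> \<delta>0"
          proof
            fix z :: complex assume z: "z \<in> ball 0 2"
            show "cmod (hev D (P1 F) z (snd p) 1 - (\<rho> * z + eps0 * c j)) \<le> \<delta>0"
              by (rule cl_le[OF _ hev_cont_w j(3)]) (use P1F j z in blast)
          qed
          have ca: "cmod (hvx D (P1 F) (fst p) (snd p) - \<rho>) \<le> 2 * \<delta>0"
            by (rule cauchy_aF[OF hcl j(2)])
          show ?thesis
            using ca rho norm_triangle_ineq2[of "hvx D (P1 F) (fst p) (snd p)" \<rho>]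
              norm_triangle_ineq2[of \<rho> "hvx D (P1 F) (fst p) (snd p)"] by (simp add: norm_minus_commute)
        qed
        have dFb: "mF \<le> cmod (hvy D (P2 F) (fst p) (snd p))" if pZ: "p \<in> closure Z" for p
        proof -
          obtain j where j: "j \<in> {1,2,3}" "cmod (fst p) \<le> 1" "snd p \<in> closure (V j l)" using memZ[OF pZ] by blast
          have "A * cmod (chi j) ^ l \<le> cmod (hvy D (P2 F) (fst p) (snd p))"
            by (rule cl_ge[OF _ hvy_cont_w j(3)]) (use ALl j dFeq in auto)
          then show ?thesis using mFle[OF j(1)] by linarith
        qed
        have e: "\<exists>e>0. \<forall>G. near D F G e \<longrightarrow> hyp_saddle D G (lam D G (closure Z))"
          by (rule hyp_F[OF R1 ZR P3F cF pos lt1 ge0 aFb mF1 dFb])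
        then show ?thesis by blast
      qed
    qed
  qed
qed


end
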